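(* Let $E$ be a uniformly convex Banach space. For all continuous actions of $H_3(\mathbb{R})$ on $E$ by affine isometries, all $a,b,c\in\mathbb{R}$ and all $\xi\in E$, \[\|\nu_{abc}\cdot\xi-\widetilde{\nu}_{cba}\cdot\xi\|\le 2e^{a+c-b}\max_{|r|\le e^b}\|Z(r)\cdot\xi-\xi\|.\]
   Context: $H_3(\mathbb{R})$ is the simply connected Lie group whose Lie algebra has basis $\mathfrak{X},\mathfrak{Y},\mathfrak{Z}$ with $[\mathfrak{X},\mathfrak{Y}]=\mathfrak{Z}$ and $\mathfrak{Z}$ central; $X(t)=\exp(t\mathfrak{X})$, etc. $\gamma_a$ is the centered Gaussian with variance $e^{2a}$, $L(\gamma_a)$ its pushforward under a one-parameter subgroup $L$; $\nu_{abc}=X(\gamma_a)Z(\gamma_b)Y(\gamma_c)$ and $\widetilde{\nu}_{cba}=Y(\gamma_c)Z(\gamma_b)X(\gamma_a)$ (convolution products); $\mu\cdot\xi=\int g\cdot\xi\,d\mu(g)$. *)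

theory Defs
  imports "HOL-Probability.Probability"
begin

definition uniformly_convex :: "'e::real_normed_vector itself \<Rightarrow> bool" where
  "uniformly_convex (_::'e itself) \<longleftrightarrow>
     (\<forall>\<epsilon>>0. \<exists>\<delta>>0. \<forall>x y::'e. norm x \<le> 1 \<and> norm y \<le> 1 \<and> norm (x - y) \<ge> \<epsilon>
        \<longrightarrow> norm ((1/2) *\<^sub>R (x + y)) \<le> 1 - \<delta>)"

text \<open>The real Heisenberg group H3(R), realised as upper unitriangular 3x3 matrices
  [[1,x,z],[0,1,y],[0,0,1]] in coordinates (x,y,z).  The basis X = E12, Y = E23,
  Z = E13 of the Lie algebra satisfies [X,Y] = Z with Z central, and
  exp(tX) = (t,0,0), exp(tY) = (0,t,0), exp(tZ) = (0,0,t).\<close>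
type_synonym heis = "real \<times> real \<times> real"

definition hmul :: "heis \<Rightarrow> heis \<Rightarrow> heis" where
  "hmul g h = (case g of (x, y, z) \<Rightarrow> case h of (x', y', z') \<Rightarrow>
                 (x + x', y + y', z + z' + x * y'))"

definition hone :: heis where "hone = (0, 0, 0)"

definition Xg :: "real \<Rightarrow> heis" where "Xg t = (t, 0, 0)"
definition Yg :: "real \<Rightarrow> heis" where "Yg t = (0, t, 0)"
definition Zg :: "real \<Rightarrow> heis" where "Zg t = (0, 0, t)"

definition cont_affine_isometric_action :: "(heis \<Rightarrow> 'e::real_normed_vector \<Rightarrow> 'e) \<Rightarrow> bool" where
  "cont_affine_isometric_action \<alpha> \<longleftrightarrow>
     (\<alpha> hone = id) \<and>
     (\<forall>g h. \<alpha> (hmul g h) = \<alpha> g \<circ> \<alpha> h) \<and>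
     (\<forall>g. \<exists>L b. linear L \<and> (\<forall>x. \<alpha> g x = L x + b)) \<and>
     (\<forall>g x y. dist (\<alpha> g x) (\<alpha> g y) = dist x y) \<and>
     continuous_on UNIV (\<lambda>p::heis \<times> 'e. \<alpha> (fst p) (snd p))"

text \<open>Density of the centred Gaussian gamma_a of variance e^(2a).\<close>
definition gdens :: "real \<Rightarrow> real \<Rightarrow> real" where
  "gdens a x = normal_density 0 (exp a) x"

text \<open>nu_abc . xi = integral of g.xi against X(gamma_a) * Z(gamma_b) * Y(gamma_c), i.e.
  the integral of X(s)Z(u)Y(t).xi with respect to gamma_a(ds) gamma_b(du) gamma_c(dt);
  written out as an integral against the Gaussian densities on R^3.\<close>
definition nu_act :: "(heis \<Rightarrow> 'e::real_normed_vector \<Rightarrow> 'e) \<Rightarrow> real \<Rightarrow> real \<Rightarrow> real \<Rightarrow> 'e \<Rightarrow> 'e" where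
  "nu_act \<alpha> a b c \<xi> = integral UNIV (\<lambda>(s, u, t).
      (gdens a s * gdens b u * gdens c t) *\<^sub>R \<alpha> (hmul (hmul (Xg s) (Zg u)) (Yg t)) \<xi>)"

text \<open>tilde-nu_cba . xi for tilde-nu_cba = Y(gamma_c) * Z(gamma_b) * X(gamma_a).\<close>
definition nut_act :: "(heis \<Rightarrow> 'e::real_normed_vector \<Rightarrow> 'e) \<Rightarrow> real \<Rightarrow> real \<Rightarrow> real \<Rightarrow> 'e \<Rightarrow> 'e" where
  "nut_act \<alpha> c b a \<xi> = integral UNIV (\<lambda>(t, u, s).
      (gdens c t * gdens b u * gdens a s) *\<^sub>R \<alpha> (hmul (hmul (Yg t) (Zg u)) (Xg s)) \<xi>)"

end

theory Submission
  imports Defs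
begin

definition hbok :: "'e::real_normed_vector \<Rightarrow> ('e \<times> real) set \<Rightarrow> bool" where
 "hbok v G \<longleftrightarrow> (\<forall>x y y'. (x,y)\<in>G \<longrightarrow> (x,y')\<in>G \<longrightarrow> y = y') \<and>
    (\<forall>x y x' y'. (x,y)\<in>G \<longrightarrow> (x',y')\<in>G \<longrightarrow> (x+x', y+y')\<in>G) \<and>
    (\<forall>c x y. (x,y)\<in>G \<longrightarrow> (c *\<^sub>R x, c*y)\<in>G) \<and>
    (\<forall>x y. (x,y)\<in>G \<longrightarrow> y \<le> norm x) \<and> (v, norm v) \<in> G"

lemma hb_init: "hbok v {(c *\<^sub>R v, c * norm v) | c. True}"
  unfolding hbok_def
proof (intro conjI allI impI)
  fix x y y' assume "(x,y) \<in> {(c *\<^sub>R v, c * norm v) | c. True}" "(x,y') \<in> {(c *\<^sub>R v, c * norm v) | c. True}"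
  obtain c where c: "x = c *\<^sub>R v" "y = c * norm v" using \<open>(x,y) \<in> _\<close> by blast
  obtain c' where c': "x = c' *\<^sub>R v" "y' = c' * norm v" using \<open>(x,y') \<in> _\<close> by blast
  show "y = y'"
  proof (cases "v = 0")
    case True then show ?thesis using c c' by simp
  next
    case False then have "c = c'" using c c' by (metis scaleR_cancel_right)
    then show ?thesis using c c' by simp
  qed
next
  fix x y x' y' assume "(x,y) \<in> {(c *\<^sub>R v, c * norm v) | c. True}" "(x',y') \<in> {(c *\<^sub>R v, c * norm v) | c. True}"
  obtain c where c: "x = c *\<^sub>R v" "y = c * norm v" using \<open>(x,y) \<in> _\<close> by blast
  obtain c' where c': "x' = c' *\<^sub>R v" "y' = c' * norm v" using \<open>(x',y') \<in> _\<close> by blast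
  from c c' show "(x+x', y+y') \<in> {(c *\<^sub>R v, c * norm v) | c. True}"
    by (auto intro!: exI[of _ "c+c'"] simp: algebra_simps)
next
  fix d x y assume "(x,y) \<in> {(c *\<^sub>R v, c * norm v) | c. True}"
  then obtain c where "x = c *\<^sub>R v" "y = c * norm v" by auto
  then show "(d *\<^sub>R x, d*y) \<in> {(c *\<^sub>R v, c * norm v) | c. True}"
    by (auto intro!: exI[of _ "d*c"])
next
  fix x y assume "(x,y) \<in> {(c *\<^sub>R v, c * norm v) | c. True}"
  then obtain c where "x = c *\<^sub>R v" "y = c * norm v" by auto
  then show "y \<le> norm x"
    by (simp add: mult_right_mono)
next
  show "(v, norm v) \<in> {(c *\<^sub>R v, c * norm v) | c. True}"
    by (auto intro!: exI[of _ 1])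
qed

lemma hb_chain:
  assumes "C \<noteq> {}" "subset.chain {G. hbok v G} C"
  shows "hbok v (\<Union>C)"
proof -
  have CA: "\<And>X. X \<in> C \<Longrightarrow> hbok v X" and ch: "\<And>X Y. X \<in> C \<Longrightarrow> Y \<in> C \<Longrightarrow> X \<subseteq> Y \<or> Y \<subseteq> X"
    using assms(2) by (auto simp: subset_chain_def)
  have two: "\<exists>Z\<in>C. p \<in> Z \<and> q \<in> Z" if pq: "p \<in> \<Union>C" "q \<in> \<Union>C" for p q
  proof -
    obtain X where "X \<in> C" "p \<in> X" using pq(1) by blast
    moreover obtain Y where "Y \<in> C" "q \<in> Y" using pq(2) by blast
    ultimately show ?thesis using ch[of X Y] by blast
  qed
  show ?thesis
    unfolding hbok_def
  proof (intro conjI allI impI)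
    fix x y y' assume a: "(x,y) \<in> \<Union>C" "(x,y') \<in> \<Union>C"
    then obtain Z where "Z \<in> C" "(x,y) \<in> Z" "(x,y') \<in> Z" using two by blast
    then show "y = y'" using CA[of Z] unfolding hbok_def by blast
  next
    fix x y x' y' assume a: "(x,y) \<in> \<Union>C" "(x',y') \<in> \<Union>C"
    then obtain Z where "Z \<in> C" "(x,y) \<in> Z" "(x',y') \<in> Z" using two by blast
    then show "(x+x', y+y') \<in> \<Union>C" using CA[of Z] unfolding hbok_def by blast
  next
    fix c x y assume "(x,y) \<in> \<Union>C"
    then obtain Z where "Z \<in> C" "(x,y) \<in> Z" by blast
    then show "(c *\<^sub>R x, c*y) \<in> \<Union>C" using CA[of Z] unfolding hbok_def by blast
  next
    fix x y assume "(x,y) \<in> \<Union>C"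
    then obtain Z where "Z \<in> C" "(x,y) \<in> Z" by blast
    then show "y \<le> norm x" using CA[of Z] unfolding hbok_def by blast
  next
    obtain Z where "Z \<in> C" using assms(1) by blast
    then show "(v, norm v) \<in> \<Union>C" using CA[of Z] unfolding hbok_def by blast
  qed
qed

lemma hb_total:
  fixes v :: "'e::real_normed_vector"
  assumes M: "hbok v M" and max: "\<forall>X. hbok v X \<longrightarrow> M \<subseteq> X \<longrightarrow> X = M"
  shows "\<exists>y. (x0, y) \<in> M"
proof (rule ccontr)
  assume nx: "\<not> (\<exists>y. (x0, y) \<in> M)"
  have fnl: "\<And>x y y'. (x,y)\<in>M \<Longrightarrow> (x,y')\<in>M \<Longrightarrow> y = y'"
   and add: "\<And>x y x' y'. (x,y)\<in>M \<Longrightarrow> (x',y')\<in>M \<Longrightarrow> (x+x', y+y')\<in>M"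
   and scl: "\<And>c x y. (x,y)\<in>M \<Longrightarrow> (c *\<^sub>R x, c*y)\<in>M"
   and bnd: "\<And>x y. (x,y)\<in>M \<Longrightarrow> y \<le> norm x"
   and vin: "(v, norm v) \<in> M" using M unfolding hbok_def by blast+
  have zero: "(0, 0) \<in> M" using scl[OF vin, of 0] by simp
  define S where "S = {y - norm (x - x0) | x y. (x,y) \<in> M}"
  have Sne: "S \<noteq> {}" using zero unfolding S_def by blast
  have key: "y - norm (x - x0) \<le> norm (x' + x0) - y'" if "(x,y) \<in> M" "(x',y') \<in> M" for x y x' y'
  proof -
    have "y + y' \<le> norm (x + x')" using bnd[OF add[OF that]] .
    also have "\<dots> = norm ((x - x0) + (x' + x0))" by (simp add: algebra_simps)
    also have "\<dots> \<le> norm (x - x0) + norm (x' + x0)" by (rule norm_triangle_ineq)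
    finally show ?thesis by simp
  qed
  define c where "c = Sup S"
  have bddS: "bdd_above S"
    unfolding S_def bdd_above_def using key[OF _ zero] by auto
  have c_ge: "y - norm (x - x0) \<le> c" if "(x,y) \<in> M" for x y
    unfolding c_def by (rule cSup_upper[OF _ bddS]) (use that S_def in blast)
  have c_le: "c \<le> norm (x' + x0) - y'" if "(x',y') \<in> M" for x' y'
    unfolding c_def by (rule cSup_least[OF Sne]) (use key[OF _ that] S_def in blast)
  define M' where "M' = {(d + t *\<^sub>R x0, y + t * c) | d y t. (d,y) \<in> M}"
  have "hbok v M'"
    unfolding hbok_def
  proof (intro conjI allI impI)
    fix x y y' assume "(x,y) \<in> M'" "(x,y') \<in> M'"
    then obtain d1 z1 t1 d2 z2 t2 where A: "(d1,z1)\<in>M" "(d2,z2)\<in>M" "x = d1 + t1 *\<^sub>R x0" "y = z1 + t1*c"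
       "x = d2 + t2 *\<^sub>R x0" "y' = z2 + t2*c" unfolding M'_def by blast
    have "t1 = t2"
    proof (rule ccontr)
      assume ne: "t1 \<noteq> t2"
      have "(d2 + (-1) *\<^sub>R d1, z2 + (-1) * z1) \<in> M" using add[OF A(2) scl[OF A(1)]] .
      from scl[OF this, of "1/(t1 - t2)"]
      have "((1/(t1-t2)) *\<^sub>R (d2 - d1), (1/(t1-t2)) * (z2 - z1)) \<in> M" by simp
      moreover have "(1/(t1-t2)) *\<^sub>R (d2 - d1) = x0"
      proof -
        have "d2 - d1 = (t1 - t2) *\<^sub>R x0" using A(3,5) by (simp add: algebra_simps)
        then show ?thesis using ne by simp
      qed
      ultimately show False using nx by auto
    qed
    then have "d1 = d2" using A by simp
    then have "z1 = z2" using fnl A by blast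
    then show "y = y'" using A \<open>t1 = t2\<close> by simp
  next
    fix x y x' y' assume "(x,y) \<in> M'" "(x',y') \<in> M'"
    then obtain d1 z1 t1 d2 z2 t2 where A: "(d1,z1)\<in>M" "(d2,z2)\<in>M" "x = d1 + t1 *\<^sub>R x0" "y = z1 + t1*c"
       "x' = d2 + t2 *\<^sub>R x0" "y' = z2 + t2*c" unfolding M'_def by blast
    have "(x+x', y+y') = ((d1+d2) + (t1+t2) *\<^sub>R x0, (z1+z2) + (t1+t2)*c)"
      using A by (simp add: algebra_simps)
    then show "(x+x', y+y') \<in> M'" unfolding M'_def using add[OF A(1,2)] by blast
  next
    fix r x y assume "(x,y) \<in> M'"
    then obtain d1 z1 t1 where A: "(d1,z1)\<in>M" "x = d1 + t1 *\<^sub>R x0" "y = z1 + t1*c"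
      unfolding M'_def by blast
    have "(r *\<^sub>R x, r*y) = (r *\<^sub>R d1 + (r*t1) *\<^sub>R x0, r*z1 + (r*t1)*c)"
      using A by (simp add: algebra_simps)
    then show "(r *\<^sub>R x, r*y) \<in> M'" unfolding M'_def using scl[OF A(1), of r] by blast
  next
    fix x y assume "(x,y) \<in> M'"
    then obtain d z t where A: "(d,z)\<in>M" "x = d + t *\<^sub>R x0" "y = z + t*c"
      unfolding M'_def by blast
    show "y \<le> norm x"
    proof (cases "t = 0")
      case True then show ?thesis using A bnd by simp
    next
      case False
      have B: "((1/t) *\<^sub>R d, (1/t) * z) \<in> M" using scl[OF A(1)] .
      show ?thesis
      proof (cases "t > 0")
        case True
        have "c \<le> norm ((1/t) *\<^sub>R d + x0) - (1/t) * z" using c_le[OF B] .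
        then have "t * c \<le> t * norm ((1/t) *\<^sub>R d + x0) - z"
          using True by (simp add: field_simps)
        also have "t * norm ((1/t) *\<^sub>R d + x0) = norm (d + t *\<^sub>R x0)"
        proof -
          have "t * norm ((1/t) *\<^sub>R d + x0) = norm (t *\<^sub>R ((1/t) *\<^sub>R d + x0))" using True by simp
          also have "t *\<^sub>R ((1/t) *\<^sub>R d + x0) = d + t *\<^sub>R x0" using True by (simp add: algebra_simps)
          finally show ?thesis .
        qed
        finally show ?thesis using A by simp
      next
        case False
        then have tn: "t < 0" using \<open>t \<noteq> 0\<close> by simp
        have B': "((-1/t) *\<^sub>R d, (-1/t) * z) \<in> M" using scl[OF A(1)] .
        have "(-t) * ((-1/t) * z - norm ((-1/t) *\<^sub>R d - x0)) \<le> (-t) * c"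
          using mult_left_mono[OF c_ge[OF B'], of "-t"] tn by simp
        moreover have "(-t) * norm ((-1/t) *\<^sub>R d - x0) = norm (d + t *\<^sub>R x0)"
        proof -
          have "(-t) * norm ((-1/t) *\<^sub>R d - x0) = norm ((-t) *\<^sub>R ((-1/t) *\<^sub>R d - x0))" using tn by simp
          also have "(-t) *\<^sub>R ((-1/t) *\<^sub>R d - x0) = d + t *\<^sub>R x0" using tn by (simp add: algebra_simps)
          finally show ?thesis by simp
        qed
        ultimately show ?thesis using A tn by (simp add: algebra_simps)
      qed
    qed
  next
    have "(v, norm v) = (v + 0 *\<^sub>R x0, norm v + 0 * c)" by simp
    then show "(v, norm v) \<in> M'" unfolding M'_def using vin by blast
  qed
  moreover have "M \<subseteq> M'"
  proof
    fix p assume "p \<in> M"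
    moreover have "p = (fst p + 0 *\<^sub>R x0, snd p + 0 * c)" by simp
    ultimately show "p \<in> M'" unfolding M'_def by (metis (mono_tags, lifting) mem_Collect_eq prod.collapse)
  qed
  moreover have "(x0, c) \<in> M'"
  proof -
    have "(x0, c) = (0 + 1 *\<^sub>R x0, 0 + 1 * c)" by simp
    then show ?thesis unfolding M'_def using zero by blast
  qed
  ultimately show False using max nx by blast
qed

lemma hahn_banach_norm:
  fixes v :: "'e::real_normed_vector"
  shows "\<exists>l. bounded_linear l \<and> (\<forall>x. \<bar>l x\<bar> \<le> norm x) \<and> l v = norm v"
proof -
  have "\<exists>M\<in>{G. hbok v G}. \<forall>X\<in>{G. hbok v G}. M \<subseteq> X \<longrightarrow> X = M"
    by (rule subset_Zorn_nonempty) (use hb_init hb_chain in blast)+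
  then obtain M where M: "hbok v M" and max: "\<forall>X. hbok v X \<longrightarrow> M \<subseteq> X \<longrightarrow> X = M" by auto
  have fnl: "\<And>x y y'. (x,y)\<in>M \<Longrightarrow> (x,y')\<in>M \<Longrightarrow> y = y'"
   and add: "\<And>x y x' y'. (x,y)\<in>M \<Longrightarrow> (x',y')\<in>M \<Longrightarrow> (x+x', y+y')\<in>M"
   and scl: "\<And>c x y. (x,y)\<in>M \<Longrightarrow> (c *\<^sub>R x, c*y)\<in>M"
   and bnd: "\<And>x y. (x,y)\<in>M \<Longrightarrow> y \<le> norm x"
   and vin: "(v, norm v) \<in> M" using M unfolding hbok_def by blast+
  define l where "l x = (THE y. (x,y) \<in> M)" for x
  have lM: "(x, l x) \<in> M" for x
  proof -
    obtain y where y: "(x,y) \<in> M" using hb_total[OF M max] by blast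
    have "(THE y. (x,y)\<in>M) = y" by (rule the_equality) (use y fnl in blast)+
    then show ?thesis using y by (simp add: l_def)
  qed
  have leq: "l x = y" if "(x,y) \<in> M" for x y using fnl[OF lM that] .
  have ladd: "l (x + y) = l x + l y" for x y using leq[OF add[OF lM lM]] .
  have lscl: "l (r *\<^sub>R x) = r * l x" for r x using leq[OF scl[OF lM]] .
  have lb: "\<bar>l x\<bar> \<le> norm x" for x
  proof -
    have "l x \<le> norm x" using bnd[OF lM] .
    moreover have "- l x \<le> norm x" using bnd[OF lM, of "-x"] lscl[of "-1" x] by simp
    ultimately show ?thesis by simp
  qed
  have "bounded_linear l"
    by (rule bounded_linear_intro[where K=1]) (use ladd lscl lb in auto)
  then show ?thesis using lb leq[OF vin] by blast
qed

lemma subadd_growth: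
  fixes d :: "real \<Rightarrow> real"
  assumes d0: "d 0 = 0" and sub: "\<And>x y. d (x + y) \<le> d x + d y"
    and dm: "\<And>x. \<bar>x\<bar> \<le> \<delta> \<Longrightarrow> d x \<le> m" and dpos: "\<delta> > 0" and m0: "m \<ge> 0"
  shows "d r \<le> m * (1 + \<bar>r\<bar> / \<delta>)"
proof -
  define n where "n = nat \<lceil>\<bar>r\<bar> / \<delta>\<rceil>"
  have nge: "real n \<ge> \<bar>r\<bar> / \<delta>" unfolding n_def by linarith
  have nle: "real n \<le> \<bar>r\<bar> / \<delta> + 1" unfolding n_def
    using dpos by (simp add: of_nat_nat)
  have mult: "d (real k * y) \<le> real k * d y" for k y
  proof (induction k)
    case 0 then show ?case using d0 by simp
  next
    case (Suc k)
    have "d (real (Suc k) * y) = d (real k * y + y)" by (simp add: algebra_simps)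
    also have "\<dots> \<le> d (real k * y) + d y" by (rule sub)
    also have "\<dots> \<le> real (Suc k) * d y" using Suc by (simp add: algebra_simps)
    finally show ?case .
  qed
  show ?thesis
  proof (cases "n = 0")
    case True
    then have "\<bar>r\<bar> / \<delta> \<le> 0" using nge by simp
    then have "r = 0" using dpos by (simp add: divide_le_0_iff)
    then show ?thesis using d0 m0 by simp
  next
    case False
    define y where "y = r / real n"
    have r1: "\<bar>r\<bar> \<le> real n * \<delta>" using nge pos_divide_le_eq[OF dpos] by blast
    have npos: "real n > 0" using False by simp
    have "\<bar>y\<bar> = \<bar>r\<bar> / real n" unfolding y_def by simp
    also have "\<dots> \<le> \<delta>" using r1 pos_divide_le_eq[OF npos] by (simp add: mult.commute)
    finally have "\<bar>y\<bar> \<le> \<delta>" .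
    then have dy: "d y \<le> m" by (rule dm)
    have "r = real n * y" unfolding y_def using False by simp
    then have "d r \<le> real n * d y" using mult by simp
    also have "\<dots> \<le> real n * m" using dy by (simp add: mult_left_mono)
    also have "\<dots> \<le> (\<bar>r\<bar> / \<delta> + 1) * m" using nle m0 by (simp add: mult_right_mono)
    finally show ?thesis by (simp add: algebra_simps)
  qed
qed

context
  fixes \<alpha> :: "heis \<Rightarrow> 'e::real_normed_vector \<Rightarrow> 'e"
  assumes A: "cont_affine_isometric_action \<alpha>"
begin

lemma act_id: "\<alpha> hone x = x" using A unfolding cont_affine_isometric_action_def by simp
lemma act_mul: "\<alpha> (hmul g h) x = \<alpha> g (\<alpha> h x)" using A unfolding cont_affine_isometric_action_def by (metis comp_apply)
lemma act_iso: "norm (\<alpha> g x - \<alpha> g y) = norm (x - y)"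
  using A unfolding cont_affine_isometric_action_def by (metis dist_norm)
lemma act_cont: "continuous_on UNIV (\<lambda>p. \<alpha> (fst p) (snd p))"
  using A unfolding cont_affine_isometric_action_def by simp
lemma act_cont_comp:
  assumes "continuous_on S f" "continuous_on S g"
  shows "continuous_on S (\<lambda>x. \<alpha> (f x) (g x))"
proof -
  have "continuous_on S (\<lambda>x. (f x, g x))" using assms by (intro continuous_intros)
  from continuous_on_compose2[OF act_cont this] show ?thesis by simp
qed

lemma oneparam_growth:
  fixes L :: "real \<Rightarrow> heis"
  assumes Lmul: "\<And>x y. hmul (L x) (L y) = L (x + y)" and L0: "L 0 = hone"
    and Lc: "continuous_on UNIV L" and dpos: "\<delta> > 0"
  shows "bdd_above ((\<lambda>x. norm (\<alpha> (L x) \<xi> - \<xi>)) ` {-\<delta>..\<delta>})"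
    and "norm (\<alpha> (L r) \<xi> - \<xi>) \<le> (SUP x\<in>{-\<delta>..\<delta>}. norm (\<alpha> (L x) \<xi> - \<xi>)) * (1 + \<bar>r\<bar> / \<delta>)"
proof -
  define d where "d x = norm (\<alpha> (L x) \<xi> - \<xi>)" for x
  have cd: "continuous_on UNIV d" unfolding d_def
    by (intro continuous_intros act_cont_comp Lc)
  show bdd: "bdd_above ((\<lambda>x. norm (\<alpha> (L x) \<xi> - \<xi>)) ` {-\<delta>..\<delta>})"
    using compact_continuous_image[OF continuous_on_subset[OF cd] compact_Icc, of "-\<delta>" \<delta>]
    unfolding d_def by (auto intro: bounded_imp_bdd_above compact_imp_bounded)
  have d0: "d 0 = 0" unfolding d_def L0 act_id by simp
  have sub: "d (x + y) \<le> d x + d y" for x y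
  proof -
    have "d (x + y) = norm (\<alpha> (L x) (\<alpha> (L y) \<xi>) - \<xi>)" unfolding d_def Lmul[symmetric] act_mul ..
    also have "\<dots> \<le> norm (\<alpha> (L x) (\<alpha> (L y) \<xi>) - \<alpha> (L x) \<xi>) + norm (\<alpha> (L x) \<xi> - \<xi>)"
      using norm_triangle_ineq[of "\<alpha> (L x) (\<alpha> (L y) \<xi>) - \<alpha> (L x) \<xi>" "\<alpha> (L x) \<xi> - \<xi>"] by simp
    also have "\<dots> = d y + d x" unfolding d_def act_iso ..
    finally show ?thesis by simp
  qed
  have bdd': "bdd_above (d ` {-\<delta>..\<delta>})" using bdd unfolding d_def .
  have dm: "d x \<le> (SUP x\<in>{-\<delta>..\<delta>}. d x)" if "\<bar>x\<bar> \<le> \<delta>" for x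
  proof (rule cSUP_upper[OF _ bdd'])
    show "x \<in> {-\<delta>..\<delta>}" using that by (auto simp: abs_le_iff)
  qed
  have m0: "0 \<le> (SUP x\<in>{-\<delta>..\<delta>}. d x)"
    using dm[of 0] dpos d0 by simp
  show "norm (\<alpha> (L r) \<xi> - \<xi>) \<le> (SUP x\<in>{-\<delta>..\<delta>}. norm (\<alpha> (L x) \<xi> - \<xi>)) * (1 + \<bar>r\<bar> / \<delta>)"
    using subadd_growth[of d, OF d0 sub dm dpos m0] unfolding d_def .
qed

end

lemma sets_lborel3: "sets (lborel \<Otimes>\<^sub>M (lborel \<Otimes>\<^sub>M lborel)) = sets (borel :: (real \<times> real \<times> real) measure)"
  by (metis lborel_prod sets_lborel)
lemma sets_lborel2: "sets (lborel \<Otimes>\<^sub>M lborel) = sets (borel :: (real \<times> real) measure)"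
  by (metis lborel_prod sets_lborel)

lemma bm_fst3[measurable]: "fst \<in> measurable (borel::(real\<times>real\<times>real) measure) (borel::real measure)"
  by (intro borel_measurable_continuous_onI continuous_intros)
lemma bm_snd3[measurable]: "snd \<in> measurable (borel::(real\<times>real\<times>real) measure) (borel::(real\<times>real) measure)"
  by (intro borel_measurable_continuous_onI continuous_intros)
lemma bm_fst2[measurable]: "fst \<in> measurable (borel::(real\<times>real) measure) (borel::real measure)"
  by (intro borel_measurable_continuous_onI continuous_intros)
lemma bm_snd2[measurable]: "snd \<in> measurable (borel::(real\<times>real) measure) (borel::real measure)"
  by (intro borel_measurable_continuous_onI continuous_intros)

lemma meas3:
  fixes g :: "real \<times> real \<times> real \<Rightarrow> 'b::topological_space"
  assumes "g \<in> borel_measurable borel"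
  shows "g \<in> borel_measurable (lborel \<Otimes>\<^sub>M (lborel \<Otimes>\<^sub>M lborel))"
  using assms measurable_cong_sets[OF sets_lborel3 refl] by blast

lemma iter3:
  fixes g :: "real \<times> real \<times> real \<Rightarrow> ennreal"
  assumes g: "g \<in> borel_measurable borel"
  shows "(\<integral>\<^sup>+x. g x \<partial>lborel) = (\<integral>\<^sup>+s. \<integral>\<^sup>+t. \<integral>\<^sup>+u. g (s,u,t) \<partial>lborel \<partial>lborel \<partial>lborel)"
proof -
  have g3[measurable]: "g \<in> borel_measurable (lborel \<Otimes>\<^sub>M (lborel \<Otimes>\<^sub>M lborel))" using meas3[OF g] .
  have g2: "g \<in> borel_measurable (lborel \<Otimes>\<^sub>M (lborel::(real\<times>real) measure))"
    using g measurable_cong_sets[of "lborel \<Otimes>\<^sub>M (lborel::(real\<times>real) measure)" borel] by (simp add: lborel_prod)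
  have "(\<integral>\<^sup>+x. g x \<partial>lborel) = (\<integral>\<^sup>+x. g x \<partial>(lborel \<Otimes>\<^sub>M (lborel::(real\<times>real) measure)))"
    by (simp only: lborel_prod)
  also have "\<dots> = (\<integral>\<^sup>+s. \<integral>\<^sup>+p. g (s,p) \<partial>lborel \<partial>lborel)"
    by (rule lborel.nn_integral_fst[symmetric, OF g2])
  also have "\<dots> = (\<integral>\<^sup>+s. \<integral>\<^sup>+t. \<integral>\<^sup>+u. g (s,u,t) \<partial>lborel \<partial>lborel \<partial>lborel)"
  proof (rule nn_integral_cong)
    fix s :: real
    have [measurable]: "(\<lambda>p. g (s, p)) \<in> borel_measurable (lborel \<Otimes>\<^sub>M lborel)" by measurable
    have "(\<integral>\<^sup>+p. g (s,p) \<partial>lborel) = (\<integral>\<^sup>+p. g (s,p) \<partial>(lborel \<Otimes>\<^sub>M lborel))"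
      by (simp only: lborel_prod)
    then show "(\<integral>\<^sup>+p. g (s,p) \<partial>lborel) = (\<integral>\<^sup>+t. \<integral>\<^sup>+u. g (s,u,t) \<partial>lborel \<partial>lborel)"
      using lborel_pair.nn_integral_snd[of "\<lambda>p. g (s,p)"] by simp
  qed
  finally show ?thesis .
qed

definition shr :: "real \<times> real \<times> real \<Rightarrow> real \<times> real \<times> real" where
  "shr = (\<lambda>(s,u,t). (s, u + s*t, t))"
definition prm :: "real \<times> real \<times> real \<Rightarrow> real \<times> real \<times> real" where
  "prm = (\<lambda>(t,u,s). (s, u, t))"

lemma shr_cont: "continuous_on UNIV shr"
  unfolding shr_def case_prod_beta by (intro continuous_intros)
lemma prm_cont: "continuous_on UNIV prm"
  unfolding prm_def case_prod_beta by (intro continuous_intros)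
lemma shr_meas[measurable]: "shr \<in> borel_measurable borel"
  by (rule borel_measurable_continuous_onI[OF shr_cont])
lemma prm_meas[measurable]: "prm \<in> borel_measurable borel"
  by (rule borel_measurable_continuous_onI[OF prm_cont])

lemma shr_nn:
  fixes g :: "real \<times> real \<times> real \<Rightarrow> ennreal"
  assumes g[measurable]: "g \<in> borel_measurable borel"
  shows "(\<integral>\<^sup>+x. g (shr x) \<partial>lborel) = (\<integral>\<^sup>+x. g x \<partial>lborel)"
proof -
  have m: "(\<lambda>x. g (shr x)) \<in> borel_measurable borel" by measurable
  have inner: "(\<integral>\<^sup>+u. g (s, u + s*t, t) \<partial>lborel) = (\<integral>\<^sup>+u. g (s,u,t) \<partial>lborel)" for s t
  proof -
    have [measurable]: "(\<lambda>u. g (s,u,t)) \<in> borel_measurable borel" by measurable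
    show ?thesis using nn_integral_real_affine[of "\<lambda>u. g (s,u,t)" 1 "s*t"] by (simp add: add.commute)
  qed
  show ?thesis
    unfolding iter3[OF m] iter3[OF g] by (simp add: shr_def inner)
qed

lemma prm_nn:
  fixes g :: "real \<times> real \<times> real \<Rightarrow> ennreal"
  assumes g[measurable]: "g \<in> borel_measurable borel"
  shows "(\<integral>\<^sup>+x. g (prm x) \<partial>lborel) = (\<integral>\<^sup>+x. g x \<partial>lborel)"
proof -
  have m: "(\<lambda>x. g (prm x)) \<in> borel_measurable borel" by measurable
  have g3[measurable]: "g \<in> borel_measurable (lborel \<Otimes>\<^sub>M (lborel \<Otimes>\<^sub>M lborel))" using meas3[OF g] .
  have [measurable]: "(\<lambda>(s,t). \<integral>\<^sup>+u. g (s,u,t) \<partial>lborel) \<in> borel_measurable (lborel \<Otimes>\<^sub>M lborel)"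
    by measurable
  have "(\<integral>\<^sup>+t. \<integral>\<^sup>+s. \<integral>\<^sup>+u. g (s,u,t) \<partial>lborel \<partial>lborel \<partial>lborel) = (\<integral>\<^sup>+s. \<integral>\<^sup>+t. \<integral>\<^sup>+u. g (s,u,t) \<partial>lborel \<partial>lborel \<partial>lborel)"
    using lborel_pair.Fubini[of "\<lambda>(s,t). \<integral>\<^sup>+u. g (s,u,t) \<partial>lborel"] by simp
  then show ?thesis
    unfolding iter3[OF m] iter3[OF g] by (simp add: prm_def)
qed

lemma distr_eq_lborel:
  fixes T :: "real \<times> real \<times> real \<Rightarrow> real \<times> real \<times> real"
  assumes T[measurable]: "T \<in> borel_measurable borel"
    and nn: "\<And>g::real \<times> real \<times> real \<Rightarrow> ennreal. g \<in> borel_measurable borel \<Longrightarrow> (\<integral>\<^sup>+x. g (T x) \<partial>lborel) = (\<integral>\<^sup>+x. g x \<partial>lborel)"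
  shows "distr lborel lborel T = lborel"
proof (rule measure_eqI)
  show "sets (distr lborel lborel T) = sets lborel" by simp
  fix A assume "A \<in> sets (distr lborel lborel T)"
  then have A[measurable]: "A \<in> sets borel" by simp
  have TA: "T -` A \<in> sets borel" using measurable_sets[OF T A] by simp
  have Tm: "T \<in> measurable lborel lborel" by simp
  have "emeasure (distr lborel lborel T) A = emeasure lborel (T -` A \<inter> space lborel)"
    by (rule emeasure_distr[OF Tm]) (simp add: TA)
  also have "\<dots> = (\<integral>\<^sup>+x. indicator (T -` A) x \<partial>lborel)"
    using TA by simp
  also have "\<dots> = (\<integral>\<^sup>+x. indicator A (T x) \<partial>lborel)"
    by (intro nn_integral_cong) (simp split: split_indicator)
  also have "\<dots> = (\<integral>\<^sup>+x. indicator A x \<partial>lborel)"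
    by (rule nn) simp
  also have "\<dots> = emeasure lborel A" by simp
  finally show "emeasure (distr lborel lborel T) A = emeasure lborel A" .
qed

lemma distr_shr: "distr lborel lborel shr = lborel"
  by (rule distr_eq_lborel[OF shr_meas shr_nn])
lemma distr_prm: "distr lborel lborel prm = lborel"
  by (rule distr_eq_lborel[OF prm_meas prm_nn])

lemma shr_integrable:
  fixes f :: "real \<times> real \<times> real \<Rightarrow> real"
  assumes [measurable]: "f \<in> borel_measurable borel"
  shows "integrable lborel (\<lambda>x. f (shr x)) \<longleftrightarrow> integrable lborel f"
  using integrable_distr_eq[of shr lborel lborel f] by (simp add: distr_shr)
lemma shr_integral:
  fixes f :: "real \<times> real \<times> real \<Rightarrow> real"
  assumes [measurable]: "f \<in> borel_measurable borel"
  shows "(\<integral>x. f (shr x) \<partial>lborel) = (\<integral>x. f x \<partial>lborel)"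
  using integral_distr[of shr lborel lborel f] by (simp add: distr_shr)
lemma prm_integrable:
  fixes f :: "real \<times> real \<times> real \<Rightarrow> real"
  assumes [measurable]: "f \<in> borel_measurable borel"
  shows "integrable lborel (\<lambda>x. f (prm x)) \<longleftrightarrow> integrable lborel f"
  using integrable_distr_eq[of prm lborel lborel f] by (simp add: distr_prm)
lemma prm_integral:
  fixes f :: "real \<times> real \<times> real \<Rightarrow> real"
  assumes [measurable]: "f \<in> borel_measurable borel"
  shows "(\<integral>x. f (prm x) \<partial>lborel) = (\<integral>x. f x \<partial>lborel)"
  using integral_distr[of prm lborel lborel f] by (simp add: distr_prm)

lemma prod3_nn:
  fixes f g h :: "real \<Rightarrow> real"
  assumes [measurable]: "f \<in> borel_measurable borel" "g \<in> borel_measurable borel" "h \<in> borel_measurable borel"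
    and nn: "\<And>x. f x \<ge> 0" "\<And>x. g x \<ge> 0" "\<And>x. h x \<ge> 0"
  shows "(\<integral>\<^sup>+x. ennreal (f (fst x) * g (fst (snd x)) * h (snd (snd x))) \<partial>lborel)
     = (\<integral>\<^sup>+s. f s \<partial>lborel) * (\<integral>\<^sup>+u. g u \<partial>lborel) * (\<integral>\<^sup>+t. h t \<partial>lborel)"
proof -
  have m: "(\<lambda>x. ennreal (f (fst x) * g (fst (snd x)) * h (snd (snd x)))) \<in> borel_measurable borel" by measurable
  have "(\<integral>\<^sup>+s. \<integral>\<^sup>+t. \<integral>\<^sup>+u. ennreal (f s * g u * h t) \<partial>lborel \<partial>lborel \<partial>lborel)
      = (\<integral>\<^sup>+s. \<integral>\<^sup>+t. ennreal (f s) * ennreal (h t) * (\<integral>\<^sup>+u. g u \<partial>lborel) \<partial>lborel \<partial>lborel)"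
    using nn by (simp add: ennreal_mult' nn_integral_cmult mult_ac nn_integral_multc)
  also have "\<dots> = (\<integral>\<^sup>+s. ennreal (f s) * (\<integral>\<^sup>+u. g u \<partial>lborel) * (\<integral>\<^sup>+t. h t \<partial>lborel) \<partial>lborel)"
    by (simp add: nn_integral_cmult nn_integral_multc mult_ac)
  also have "\<dots> = (\<integral>\<^sup>+s. f s \<partial>lborel) * (\<integral>\<^sup>+u. g u \<partial>lborel) * (\<integral>\<^sup>+t. h t \<partial>lborel)"
    by (simp add: nn_integral_multc)
  finally show ?thesis unfolding iter3[OF m] by simp
qed

lemma gauss_deriv_K: "\<sigma> > 0 \<Longrightarrow> ((\<lambda>y. K * exp (-(y - 0)\<^sup>2 / (2 * \<sigma>\<^sup>2))) has_real_derivative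
     (- y / \<sigma>\<^sup>2 * (K * exp (-(y - 0)\<^sup>2 / (2 * \<sigma>\<^sup>2))))) (at y)"
  by (auto intro!: derivative_eq_intros simp: field_simps power2_eq_square)
lemma nd_deriv:
  assumes "\<sigma> > 0"
  shows "(normal_density 0 \<sigma> has_real_derivative (- y / \<sigma>\<^sup>2 * normal_density 0 \<sigma> y)) (at y)"
  unfolding normal_density_def[abs_def] using gauss_deriv_K[OF assms] .

lemma nd_even: "normal_density 0 \<sigma> (- x) = normal_density 0 \<sigma> x"
  by (simp add: normal_density_def)

lemma nd_cont: "\<sigma> > 0 \<Longrightarrow> continuous_on UNIV (normal_density 0 \<sigma>)"
  unfolding normal_density_def[abs_def] by (intro continuous_intros) auto

lemma hbi_shift:
  fixes g :: "real \<Rightarrow> real"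
  assumes "has_bochner_integral lborel g v"
  shows "has_bochner_integral lborel (\<lambda>u. g (u - h)) v"
  using lborel_has_bochner_integral_real_affine_iff[of 1 g v "-h"] assms by simp

context
  fixes \<sigma> :: real
  assumes sp: "\<sigma> > 0"
begin

abbreviation "gg \<equiv> normal_density 0 \<sigma>"

lemma B0: "has_bochner_integral lborel gg 1"
  using integrable_normal_density[of \<sigma> 0] integral_normal_density[of \<sigma> 0] sp by (simp add: has_bochner_integral_iff)

lemma B1: "has_bochner_integral lborel (\<lambda>x. gg x * \<bar>x\<bar>) (\<sigma> * sqrt (2 / pi))"
proof -
  have "has_bochner_integral lborel (\<lambda>x. normal_density 0 \<sigma> x * \<bar>x - 0\<bar>^(2*0+1)) (2^0 * \<sigma>^(2*0+1) * fact 0 * sqrt(2/pi))"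
    by (rule normal_moment_abs_odd) (rule sp)
  then show ?thesis by simp
qed

lemma B2: "has_bochner_integral lborel (\<lambda>x. gg x * x\<^sup>2) (\<sigma>\<^sup>2)"
proof -
  have "has_bochner_integral lborel (\<lambda>x. normal_density 0 \<sigma> x * (x - 0)^(2*1)) (fact (2 * 1) / ((2 / \<sigma>\<^sup>2)^1 * fact 1))"
    by (rule normal_moment_even) (rule sp)
  moreover have "fact (2 * 1) / ((2 / \<sigma>\<^sup>2)^1 * fact 1) = (\<sigma>\<^sup>2::real)" using sp by (simp add: fact_numeral)
  ultimately show ?thesis by simp
qed

lemma big_case:
  "(\<integral>\<^sup>+u. ennreal (\<bar>gg (u - h) - gg u\<bar> * (1 + \<bar>u\<bar> / \<sigma>)) \<partial>lborel)
     \<le> ennreal (2 + 2 * sqrt (2 / pi) + \<bar>h\<bar> / \<sigma>)"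
proof -
  define f where "f u = (1 + \<bar>h\<bar>/\<sigma>) * gg (u - h) + (1/\<sigma>) * (gg (u - h) * \<bar>u - h\<bar>)
     + gg u + (1/\<sigma>) * (gg u * \<bar>u\<bar>)" for u
  have hf: "has_bochner_integral lborel f ((1 + \<bar>h\<bar>/\<sigma>) * 1 + (1/\<sigma>) * (\<sigma> * sqrt (2 / pi)) + 1 + (1/\<sigma>) * (\<sigma> * sqrt (2 / pi)))"
    unfolding f_def
    by (intro has_bochner_integral_add has_bochner_integral_mult_right hbi_shift[where g=gg] hbi_shift[where g="\<lambda>x. gg x * \<bar>x\<bar>"] B0 B1)
  have val: "(1 + \<bar>h\<bar>/\<sigma>) * 1 + (1/\<sigma>) * (\<sigma> * sqrt (2 / pi)) + 1 + (1/\<sigma>) * (\<sigma> * sqrt (2 / pi))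
     = 2 + 2 * sqrt (2 / pi) + \<bar>h\<bar> / \<sigma>" using sp by (simp add: field_simps)
  have le: "\<bar>gg (u - h) - gg u\<bar> * (1 + \<bar>u\<bar> / \<sigma>) \<le> f u" for u
  proof -
    have g1: "gg (u-h) \<ge> 0" "gg u \<ge> 0" by simp_all
    have "\<bar>u\<bar> \<le> \<bar>h\<bar> + \<bar>u - h\<bar>" by linarith
    then have "\<bar>u\<bar> / \<sigma> \<le> \<bar>h\<bar>/\<sigma> + \<bar>u - h\<bar> / \<sigma>" using sp by (simp add: add_divide_distrib[symmetric] divide_right_mono)
    then have a: "gg (u-h) * (1 + \<bar>u\<bar> / \<sigma>) \<le> gg (u-h) * (1 + \<bar>h\<bar>/\<sigma> + \<bar>u - h\<bar> / \<sigma>)"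
      using g1 by (intro mult_left_mono) auto
    have ab: "\<bar>gg (u - h) - gg u\<bar> \<le> gg (u - h) + gg u" using g1 by linarith
    have "\<bar>gg (u - h) - gg u\<bar> * (1 + \<bar>u\<bar> / \<sigma>) \<le> (gg (u - h) + gg u) * (1 + \<bar>u\<bar> / \<sigma>)"
      using sp by (intro mult_right_mono[OF ab]) auto
    also have "\<dots> = gg (u - h) * (1 + \<bar>u\<bar> / \<sigma>) + gg u * (1 + \<bar>u\<bar> / \<sigma>)"
      by (rule distrib_right)
    also have "\<dots> \<le> f u"
    proof -
      have e1: "gg (u-h) * (1 + \<bar>h\<bar>/\<sigma> + \<bar>u - h\<bar> / \<sigma>) = (1 + \<bar>h\<bar>/\<sigma>) * gg (u - h) + (1/\<sigma>) * (gg (u - h) * \<bar>u - h\<bar>)"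
        by (simp add: field_simps)
      have e2: "gg u * (1 + \<bar>u\<bar> / \<sigma>) = gg u + (1/\<sigma>) * (gg u * \<bar>u\<bar>)"
        by (simp add: field_simps)
      show ?thesis unfolding f_def using a e1 e2 by linarith
    qed
    finally show ?thesis .
  qed
  have "(\<integral>\<^sup>+u. ennreal (\<bar>gg (u - h) - gg u\<bar> * (1 + \<bar>u\<bar> / \<sigma>)) \<partial>lborel) \<le> (\<integral>\<^sup>+u. ennreal (f u) \<partial>lborel)"
    by (intro nn_integral_mono ennreal_leI le)
  also have "\<dots> = ennreal (integral\<^sup>L lborel f)"
  proof (rule nn_integral_eq_integral)
    show "integrable lborel f" using hf by (simp add: has_bochner_integral_iff)
    show "AE x in lborel. 0 \<le> f x"
    proof (rule AE_I2)
      fix x show "0 \<le> f x" unfolding f_def using sp by (intro add_nonneg_nonneg mult_nonneg_nonneg) auto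
    qed
  qed
  also have "integral\<^sup>L lborel f = 2 + 2 * sqrt (2 / pi) + \<bar>h\<bar> / \<sigma>"
    using hf val by (simp add: has_bochner_integral_integral_eq)
  finally show ?thesis .
qed


lemma gg_cont_at: "isCont gg x"
  using nd_cont[OF sp] by (simp add: continuous_on_eq_continuous_at)

lemma small_pointwise:
  assumes h: "h \<ge> 0"
  shows "ennreal (\<bar>gg (u - h) - gg u\<bar> * (1 + \<bar>u\<bar> / \<sigma>))
    \<le> (\<integral>\<^sup>+\<theta>. ennreal ((1 + \<bar>u\<bar> / \<sigma>) * (\<bar>u - \<theta>\<bar> / \<sigma>\<^sup>2 * gg (u - \<theta>)) * indicator {0..h} \<theta>) \<partial>lborel)"
proof -
  define D where "D \<theta> = (- (u - \<theta>) / \<sigma>\<^sup>2 * gg (u - \<theta>)) * (- 1)" for \<theta>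
  have der: "((\<lambda>\<theta>. gg (u - \<theta>)) has_real_derivative D \<theta>) (at \<theta>)" for \<theta>
  proof -
    have d1: "((\<lambda>\<theta>. u - \<theta>) has_real_derivative (-1)) (at \<theta>)"
      by (auto intro!: derivative_eq_intros)
    show ?thesis unfolding D_def by (rule DERIV_chain2[OF nd_deriv[OF sp] d1])
  qed
  have cD: "isCont D \<theta>" for \<theta>
  proof -
    have "isCont (\<lambda>\<theta>. gg (u - \<theta>)) \<theta>"
      by (rule isCont_o2[OF _ gg_cont_at]) (intro continuous_intros)
    then show ?thesis unfolding D_def using sp by (intro continuous_intros) auto
  qed
  have Dm[measurable]: "D \<in> borel_measurable borel"
    by (intro borel_measurable_continuous_onI continuous_at_imp_continuous_on) (use cD in auto)
  have hb: "has_bochner_integral lborel (\<lambda>\<theta>. D \<theta> * indicator {0..h} \<theta>) (gg (u - h) - gg (u - 0))"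
    by (rule has_bochner_integral_FTC_Icc_real[OF h]) (use der cD in auto)
  have "ennreal \<bar>gg (u - h) - gg u\<bar> = ennreal (norm (integral\<^sup>L lborel (\<lambda>\<theta>. D \<theta> * indicator {0..h} \<theta>)))"
    using hb by (simp add: has_bochner_integral_integral_eq)
  also have "\<dots> \<le> (\<integral>\<^sup>+\<theta>. norm (D \<theta> * indicator {0..h} \<theta>) \<partial>lborel)"
    by (rule integral_norm_bound_ennreal) (use hb in \<open>simp add: has_bochner_integral_iff\<close>)
  finally have s1: "ennreal \<bar>gg (u - h) - gg u\<bar> \<le> (\<integral>\<^sup>+\<theta>. norm (D \<theta> * indicator {0..h} \<theta>) \<partial>lborel)" .
  have w0: "0 \<le> 1 + \<bar>u\<bar> / \<sigma>" using sp by simp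
  have "ennreal (\<bar>gg (u - h) - gg u\<bar> * (1 + \<bar>u\<bar> / \<sigma>)) = ennreal \<bar>gg (u - h) - gg u\<bar> * ennreal (1 + \<bar>u\<bar> / \<sigma>)"
    using w0 by (simp add: ennreal_mult)
  also have "\<dots> \<le> (\<integral>\<^sup>+\<theta>. norm (D \<theta> * indicator {0..h} \<theta>) \<partial>lborel) * ennreal (1 + \<bar>u\<bar> / \<sigma>)"
    by (rule mult_right_mono[OF s1]) simp
  also have "\<dots> = (\<integral>\<^sup>+\<theta>. ennreal (norm (D \<theta> * indicator {0..h} \<theta>)) * ennreal (1 + \<bar>u\<bar> / \<sigma>) \<partial>lborel)"
    by (rule nn_integral_multc[symmetric]) simp
  also have "\<dots> = (\<integral>\<^sup>+\<theta>. ennreal ((1 + \<bar>u\<bar> / \<sigma>) * (\<bar>u - \<theta>\<bar> / \<sigma>\<^sup>2 * gg (u - \<theta>)) * indicator {0..h} \<theta>) \<partial>lborel)"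
  proof (rule nn_integral_cong)
    fix \<theta> :: real
    have "norm (D \<theta> * indicator {0..h} \<theta>) * (1 + \<bar>u\<bar> / \<sigma>) = (1 + \<bar>u\<bar> / \<sigma>) * (\<bar>u - \<theta>\<bar> / \<sigma>\<^sup>2 * gg (u - \<theta>)) * indicator {0..h} \<theta>"
      unfolding D_def by (simp add: abs_mult abs_minus_commute split: split_indicator)
    then show "ennreal (norm (D \<theta> * indicator {0..h} \<theta>)) * ennreal (1 + \<bar>u\<bar> / \<sigma>) = ennreal ((1 + \<bar>u\<bar> / \<sigma>) * (\<bar>u - \<theta>\<bar> / \<sigma>\<^sup>2 * gg (u - \<theta>)) * indicator {0..h} \<theta>)"
      using w0 by (simp add: ennreal_mult[symmetric])
  qed
  finally show ?thesis .
qed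


lemma inner_bound:
  assumes th: "\<theta> \<ge> 0"
  shows "(\<integral>\<^sup>+u. ennreal ((1 + \<bar>u\<bar> / \<sigma>) * (\<bar>u - \<theta>\<bar> / \<sigma>\<^sup>2 * gg (u - \<theta>))) \<partial>lborel)
     \<le> ennreal ((1 + \<theta>/\<sigma>) * sqrt (2 / pi) / \<sigma> + 1 / \<sigma>)"
proof -
  define r where "r u = ((1 + \<theta>/\<sigma>)/\<sigma>\<^sup>2) * (gg (u - \<theta>) * \<bar>u - \<theta>\<bar>) + (1/\<sigma>^3) * (gg (u - \<theta>) * (u - \<theta>)\<^sup>2)" for u
  have hr: "has_bochner_integral lborel r (((1 + \<theta>/\<sigma>)/\<sigma>\<^sup>2) * (\<sigma> * sqrt (2 / pi)) + (1/\<sigma>^3) * \<sigma>\<^sup>2)"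
    unfolding r_def
    by (intro has_bochner_integral_add has_bochner_integral_mult_right hbi_shift[where g="\<lambda>x. gg x * \<bar>x\<bar>"] hbi_shift[where g="\<lambda>x. gg x * x\<^sup>2"] B1 B2)
  have val: "((1 + \<theta>/\<sigma>)/\<sigma>\<^sup>2) * (\<sigma> * sqrt (2 / pi)) + (1/\<sigma>^3) * \<sigma>\<^sup>2 = (1 + \<theta>/\<sigma>) * sqrt (2 / pi) / \<sigma> + 1 / \<sigma>"
    using sp by (simp add: field_simps power2_eq_square power3_eq_cube)
  have r0: "0 \<le> r u" for u unfolding r_def using sp th by (intro add_nonneg_nonneg mult_nonneg_nonneg divide_nonneg_pos) auto
  have le: "(1 + \<bar>u\<bar> / \<sigma>) * (\<bar>u - \<theta>\<bar> / \<sigma>\<^sup>2 * gg (u - \<theta>)) \<le> r u" for u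
  proof -
    have "\<bar>u\<bar> \<le> \<theta> + \<bar>u - \<theta>\<bar>" using th by linarith
    then have "\<bar>u\<bar> / \<sigma> \<le> \<theta>/\<sigma> + \<bar>u - \<theta>\<bar> / \<sigma>" using sp by (simp add: add_divide_distrib[symmetric] divide_right_mono)
    then have "(1 + \<bar>u\<bar> / \<sigma>) * (\<bar>u - \<theta>\<bar> / \<sigma>\<^sup>2 * gg (u - \<theta>)) \<le> (1 + \<theta>/\<sigma> + \<bar>u - \<theta>\<bar> / \<sigma>) * (\<bar>u - \<theta>\<bar> / \<sigma>\<^sup>2 * gg (u - \<theta>))"
      by (intro mult_right_mono) auto
    also have "\<dots> = r u"
    proof -
      have sq: "\<bar>u - \<theta>\<bar> * \<bar>u - \<theta>\<bar> = (u - \<theta>)\<^sup>2" by (metis abs_mult_self_eq power2_eq_square)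
      have gen: "(1 + a + w / \<sigma>) * (w / \<sigma>\<^sup>2 * g) = ((1 + a)/\<sigma>\<^sup>2) * (g * w) + (1/\<sigma>^3) * (g * (w * w))" for a w g :: real
        using sp by (simp add: field_simps power2_eq_square power3_eq_cube)
      have "(1 + \<theta>/\<sigma> + \<bar>u - \<theta>\<bar> / \<sigma>) * (\<bar>u - \<theta>\<bar> / \<sigma>\<^sup>2 * gg (u - \<theta>))
          = ((1 + \<theta>/\<sigma>)/\<sigma>\<^sup>2) * (gg (u - \<theta>) * \<bar>u - \<theta>\<bar>) + (1/\<sigma>^3) * (gg (u - \<theta>) * (\<bar>u - \<theta>\<bar> * \<bar>u - \<theta>\<bar>))"
        by (rule gen)
      then show ?thesis unfolding r_def sq .
    qed
    finally show ?thesis .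
  qed
  have "(\<integral>\<^sup>+u. ennreal ((1 + \<bar>u\<bar> / \<sigma>) * (\<bar>u - \<theta>\<bar> / \<sigma>\<^sup>2 * gg (u - \<theta>))) \<partial>lborel) \<le> (\<integral>\<^sup>+u. ennreal (r u) \<partial>lborel)"
    by (intro nn_integral_mono ennreal_leI le)
  also have "\<dots> = ennreal (integral\<^sup>L lborel r)"
    by (rule nn_integral_eq_integral) (use hr r0 in \<open>auto simp: has_bochner_integral_iff\<close>)
  also have "integral\<^sup>L lborel r = (1 + \<theta>/\<sigma>) * sqrt (2 / pi) / \<sigma> + 1 / \<sigma>"
    using hr val by (simp add: has_bochner_integral_integral_eq)
  finally show ?thesis .
qed

lemma small_case:
  assumes h: "h \<ge> 0"
  shows "(\<integral>\<^sup>+u. ennreal (\<bar>gg (u - h) - gg u\<bar> * (1 + \<bar>u\<bar> / \<sigma>)) \<partial>lborel)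
     \<le> ennreal ((sqrt (2 / pi) / \<sigma> + 1 / \<sigma>) * h + sqrt (2 / pi) / (2 * \<sigma>\<^sup>2) * h\<^sup>2)"
proof -
  define E where "E u \<theta> = ennreal ((1 + \<bar>u\<bar> / \<sigma>) * (\<bar>u - \<theta>\<bar> / \<sigma>\<^sup>2 * gg (u - \<theta>)) * indicator {0..h} \<theta>)" for u \<theta>
  define V where "V \<theta> = (1 + \<theta>/\<sigma>) * sqrt (2 / pi) / \<sigma> + 1 / \<sigma>" for \<theta>
  define F where "F \<theta> = (sqrt (2 / pi) / \<sigma> + 1 / \<sigma>) * \<theta> + sqrt (2 / pi) / (2 * \<sigma>\<^sup>2) * \<theta>\<^sup>2" for \<theta>
  have Em: "case_prod E \<in> borel_measurable (lborel \<Otimes>\<^sub>M lborel)"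
    unfolding E_def by measurable
  have "(\<integral>\<^sup>+u. ennreal (\<bar>gg (u - h) - gg u\<bar> * (1 + \<bar>u\<bar> / \<sigma>)) \<partial>lborel) \<le> (\<integral>\<^sup>+u. \<integral>\<^sup>+\<theta>. E u \<theta> \<partial>lborel \<partial>lborel)"
    unfolding E_def by (intro nn_integral_mono small_pointwise[OF h])
  also have "\<dots> = (\<integral>\<^sup>+\<theta>. \<integral>\<^sup>+u. E u \<theta> \<partial>lborel \<partial>lborel)"
    by (rule lborel_pair.Fubini'[symmetric, OF Em])
  also have "\<dots> \<le> (\<integral>\<^sup>+\<theta>. ennreal (V \<theta> * indicator {0..h} \<theta>) \<partial>lborel)"
  proof (intro nn_integral_mono)
    fix \<theta> :: real
    show "(\<integral>\<^sup>+u. E u \<theta> \<partial>lborel) \<le> ennreal (V \<theta> * indicator {0..h} \<theta>)"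
    proof (cases "\<theta> \<in> {0..h}")
      case True
      then show ?thesis unfolding E_def V_def using inner_bound[of \<theta>] by simp
    next
      case False
      then show ?thesis unfolding E_def by simp
    qed
  qed
  also have "\<dots> = ennreal (F h - F 0)"
  proof -
    have hb: "has_bochner_integral lborel (\<lambda>\<theta>. V \<theta> * indicator {0..h} \<theta>) (F h - F 0)"
    proof (rule has_bochner_integral_FTC_Icc_real[OF h])
      fix x show "(F has_real_derivative V x) (at x)"
        unfolding F_def V_def using sp by (auto intro!: derivative_eq_intros simp: field_simps power2_eq_square)
      show "isCont V x" unfolding V_def using sp by (intro continuous_intros) auto
    qed
    have V0: "0 \<le> V \<theta> * indicator {0..h} \<theta>" for \<theta>
      unfolding V_def using sp by (auto split: split_indicator intro!: add_nonneg_nonneg mult_nonneg_nonneg divide_nonneg_pos)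
    show ?thesis
      using hb V0 by (subst nn_integral_eq_integral) (auto simp: has_bochner_integral_iff)
  qed
  also have "F h - F 0 = (sqrt (2 / pi) / \<sigma> + 1 / \<sigma>) * h + sqrt (2 / pi) / (2 * \<sigma>\<^sup>2) * h\<^sup>2"
    unfolding F_def by simp
  finally show ?thesis .
qed


lemma c0_le1: "sqrt (2 / pi) \<le> 1"
  using pi_gt3 by simp

lemma K_nonneg_case:
  assumes h: "h \<ge> 0"
  shows "(\<integral>\<^sup>+u. ennreal (\<bar>gg (u - h) - gg u\<bar> * (1 + \<bar>u\<bar> / \<sigma>)) \<partial>lborel) \<le> ennreal (pi * h / \<sigma>)"
proof (cases "h \<le> 2 * \<sigma>")
  case True
  have "(sqrt (2 / pi) / \<sigma> + 1 / \<sigma>) * h + sqrt (2 / pi) / (2 * \<sigma>\<^sup>2) * h\<^sup>2 \<le> pi * h / \<sigma>"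
  proof -
    have q: "sqrt (2 / pi) / (2 * \<sigma>\<^sup>2) * h\<^sup>2 = (sqrt (2 / pi) * h / \<sigma>) * (h / (2 * \<sigma>))"
      using sp by (simp add: field_simps power2_eq_square)
    have "h / (2 * \<sigma>) \<le> 1" using True sp by simp
    then have "(sqrt (2 / pi) * h / \<sigma>) * (h / (2 * \<sigma>)) \<le> sqrt (2 / pi) * h / \<sigma>"
      using h sp by (intro mult_left_le) auto
    moreover have "sqrt (2 / pi) * h / \<sigma> \<le> h / \<sigma>" using c0_le1 h sp
      by (simp add: divide_right_mono mult_left_le_one_le)
    moreover have "(sqrt (2 / pi) / \<sigma> + 1 / \<sigma>) * h = sqrt (2 / pi) * h / \<sigma> + h / \<sigma>" by (simp add: field_simps)
    moreover have "3 * (h / \<sigma>) \<le> pi * (h / \<sigma>)" using pi_gt3 h sp by (intro mult_right_mono) auto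
    ultimately show ?thesis using q by simp
  qed
  then show ?thesis using small_case[OF h] by (meson ennreal_leI order_trans)
next
  case False
  have "2 + 2 * sqrt (2 / pi) + \<bar>h\<bar> / \<sigma> \<le> pi * h / \<sigma>"
  proof -
    have hs: "h / \<sigma> \<ge> 2" using False sp by (simp add: field_simps)
    have "(pi - 1) * (h / \<sigma>) \<ge> (pi - 1) * 2" using hs pi_gt3 by (intro mult_left_mono) auto
    moreover have "(pi - 1) * (h / \<sigma>) = pi * h / \<sigma> - h / \<sigma>" using sp by (simp add: field_simps)
    moreover have "\<bar>h\<bar> / \<sigma> = h / \<sigma>" using h by simp
    moreover have "(pi - 1) * 2 = 2 * pi - 2" by simp
    ultimately show ?thesis using c0_le1 pi_gt3 by linarith
  qed
  then show ?thesis using big_case[of h] by (meson ennreal_leI order_trans)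
qed

lemma K_bound:
  "(\<integral>\<^sup>+u. ennreal (\<bar>gg (u - h) - gg u\<bar> * (1 + \<bar>u\<bar> / \<sigma>)) \<partial>lborel) \<le> ennreal (pi * \<bar>h\<bar> / \<sigma>)"
proof (cases "h \<ge> 0")
  case True then show ?thesis using K_nonneg_case[OF True] by simp
next
  case False
  have m: "(\<lambda>u. ennreal (\<bar>gg (u - h) - gg u\<bar> * (1 + \<bar>u\<bar> / \<sigma>))) \<in> borel_measurable borel" by measurable
  have "(\<integral>\<^sup>+u. ennreal (\<bar>gg (u - h) - gg u\<bar> * (1 + \<bar>u\<bar> / \<sigma>)) \<partial>lborel)
      = (\<integral>\<^sup>+u. ennreal (\<bar>gg (0 + -1 * u - h) - gg (0 + -1 * u)\<bar> * (1 + \<bar>0 + -1 * u\<bar> / \<sigma>)) \<partial>lborel)"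
    using nn_integral_real_affine[OF m, of "-1" 0] by simp
  also have "\<dots> = (\<integral>\<^sup>+u. ennreal (\<bar>gg (u - (-h)) - gg u\<bar> * (1 + \<bar>u\<bar> / \<sigma>)) \<partial>lborel)"
  proof (rule nn_integral_cong)
    fix u :: real
    have "gg (0 + -1 * u - h) = gg (u - (-h))" using nd_even[of \<sigma> "u + h"] by simp
    moreover have "gg (0 + -1 * u) = gg u" using nd_even[of \<sigma> u] by simp
    ultimately show "ennreal (\<bar>gg (0 + -1 * u - h) - gg (0 + -1 * u)\<bar> * (1 + \<bar>0 + -1 * u\<bar> / \<sigma>))
        = ennreal (\<bar>gg (u - (-h)) - gg u\<bar> * (1 + \<bar>u\<bar> / \<sigma>))" by simp
  qed
  also have "\<dots> \<le> ennreal (pi * (-h) / \<sigma>)" using K_nonneg_case[of "-h"] False by simp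
  finally show ?thesis using False by simp
qed

end

lemma gd_cont: "continuous_on UNIV (gdens a)"
  unfolding gdens_def[abs_def] using nd_cont[of "exp a"] by simp
lemma gd_cont_comp[continuous_intros]: "continuous_on S f \<Longrightarrow> continuous_on S (\<lambda>x. gdens a (f x))"
  using continuous_on_compose2[OF gd_cont] by blast
lemma gd_nonneg[simp]: "0 \<le> gdens a x" unfolding gdens_def by simp
lemma gd_meas[measurable]: "gdens a \<in> borel_measurable borel"
  unfolding gdens_def[abs_def] by simp

lemma gd_moment_nn: "(\<integral>\<^sup>+x. ennreal (gdens a x * (1 + \<bar>x\<bar>)) \<partial>lborel) = ennreal (1 + exp a * sqrt (2 / pi))"
proof -
  have hb: "has_bochner_integral lborel (\<lambda>x. gdens a x + gdens a x * \<bar>x\<bar>) (1 + exp a * sqrt (2 / pi))"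
    unfolding gdens_def by (intro has_bochner_integral_add B0 B1) simp_all
  have "(\<integral>\<^sup>+x. ennreal (gdens a x * (1 + \<bar>x\<bar>)) \<partial>lborel) = (\<integral>\<^sup>+x. ennreal (gdens a x + gdens a x * \<bar>x\<bar>) \<partial>lborel)"
    by (simp add: algebra_simps)
  also have "\<dots> = ennreal (1 + exp a * sqrt (2 / pi))"
    using hb by (subst nn_integral_eq_integral) (auto simp: has_bochner_integral_iff)
  finally show ?thesis .
qed

lemma dom_integrable:
  "integrable lborel (\<lambda>x::real\<times>real\<times>real. gdens a1 (fst x) * (1 + \<bar>fst x\<bar>) * (gdens a2 (fst (snd x)) * (1 + \<bar>fst (snd x)\<bar>))
      * (gdens a3 (snd (snd x)) * (1 + \<bar>snd (snd x)\<bar>)))"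
proof (rule integrableI_nonneg)
  show "(\<lambda>x::real\<times>real\<times>real. gdens a1 (fst x) * (1 + \<bar>fst x\<bar>) * (gdens a2 (fst (snd x)) * (1 + \<bar>fst (snd x)\<bar>))
      * (gdens a3 (snd (snd x)) * (1 + \<bar>snd (snd x)\<bar>))) \<in> borel_measurable lborel"
    by measurable
  show "AE x in lborel. 0 \<le> gdens a1 (fst x) * (1 + \<bar>fst x\<bar>) * (gdens a2 (fst (snd x)) * (1 + \<bar>fst (snd x)\<bar>))
      * (gdens a3 (snd (snd x)) * (1 + \<bar>snd (snd x)\<bar>))" by simp
  have "(\<integral>\<^sup>+x. ennreal (gdens a1 (fst x) * (1 + \<bar>fst x\<bar>) * (gdens a2 (fst (snd x)) * (1 + \<bar>fst (snd x)\<bar>))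
      * (gdens a3 (snd (snd x)) * (1 + \<bar>snd (snd x)\<bar>))) \<partial>lborel)
     = (\<integral>\<^sup>+s. gdens a1 s * (1 + \<bar>s\<bar>) \<partial>lborel) * (\<integral>\<^sup>+u. gdens a2 u * (1 + \<bar>u\<bar>) \<partial>lborel) * (\<integral>\<^sup>+t. gdens a3 t * (1 + \<bar>t\<bar>) \<partial>lborel)"
    by (rule prod3_nn) auto
  also have "\<dots> < \<infinity>" unfolding gd_moment_nn by (simp add: ennreal_mult_less_top)
  finally show "(\<integral>\<^sup>+x. ennreal (gdens a1 (fst x) * (1 + \<bar>fst x\<bar>) * (gdens a2 (fst (snd x)) * (1 + \<bar>fst (snd x)\<bar>))
      * (gdens a3 (snd (snd x)) * (1 + \<bar>snd (snd x)\<bar>))) \<partial>lborel) < \<infinity>" .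
qed

lemma poly_bound:
  fixes n K x y z w :: real
  assumes "K \<ge> 0" "n \<ge> 0" "\<bar>w\<bar> \<le> \<bar>z\<bar> + \<bar>x\<bar> * \<bar>y\<bar>"
  shows "n + K * (3 + \<bar>x\<bar> + \<bar>y\<bar> + \<bar>w\<bar>) \<le> (n + 3 * K) * ((1 + \<bar>x\<bar>) * (1 + \<bar>y\<bar>) * (1 + \<bar>z\<bar>))"
proof -
  define S where "S = 1 + \<bar>x\<bar> + \<bar>y\<bar> + \<bar>z\<bar> + \<bar>x\<bar> * \<bar>y\<bar>"
  have S1: "S \<ge> 1" unfolding S_def by simp
  have SP: "S \<le> (1 + \<bar>x\<bar>) * (1 + \<bar>y\<bar>) * (1 + \<bar>z\<bar>)"
  proof -
    have "(1 + \<bar>x\<bar>) * (1 + \<bar>y\<bar>) * (1 + \<bar>z\<bar>) = S + \<bar>x\<bar> * \<bar>z\<bar> + \<bar>y\<bar> * \<bar>z\<bar> + \<bar>x\<bar> * \<bar>y\<bar> * \<bar>z\<bar>"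
      unfolding S_def by (simp add: algebra_simps)
    then show ?thesis by simp
  qed
  have xy: "\<bar>x\<bar> * \<bar>y\<bar> \<ge> 0" by simp
  have S3: "3 * S = 3 + 3 * \<bar>x\<bar> + 3 * \<bar>y\<bar> + 3 * \<bar>z\<bar> + 3 * (\<bar>x\<bar> * \<bar>y\<bar>)" unfolding S_def by (simp add: algebra_simps)
  have "3 + \<bar>x\<bar> + \<bar>y\<bar> + \<bar>w\<bar> \<le> 3 * S" unfolding S3 using assms(3) xy abs_ge_zero[of x] abs_ge_zero[of y] abs_ge_zero[of z] by linarith
  then have "n + K * (3 + \<bar>x\<bar> + \<bar>y\<bar> + \<bar>w\<bar>) \<le> n + K * (3 * S)"
    using assms(1) by (intro add_left_mono mult_left_mono) auto
  also have "\<dots> \<le> n * S + 3 * K * S" using S1 assms(2) by (simp add: mult_le_cancel_left1)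
  also have "\<dots> = (n + 3 * K) * S" by (simp add: algebra_simps)
  also have "\<dots> \<le> (n + 3 * K) * ((1 + \<bar>x\<bar>) * (1 + \<bar>y\<bar>) * (1 + \<bar>z\<bar>))"
    using SP assms by (intro mult_left_mono) auto
  finally show ?thesis .
qed

context
  fixes \<alpha> :: "heis \<Rightarrow> 'e::real_normed_vector \<Rightarrow> 'e"
  assumes A: "cont_affine_isometric_action \<alpha>"
begin

lemma hX: "hmul (Xg x) (Xg y) = Xg (x + y)" "Xg 0 = hone" "continuous_on UNIV Xg"
  unfolding hmul_def Xg_def hone_def by (auto intro!: continuous_intros)
lemma hY: "hmul (Yg x) (Yg y) = Yg (x + y)" "Yg 0 = hone" "continuous_on UNIV Yg"
  unfolding hmul_def Yg_def hone_def by (auto intro!: continuous_intros)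
lemma hZ: "hmul (Zg x) (Zg y) = Zg (x + y)" "Zg 0 = hone" "continuous_on UNIV Zg"
  unfolding hmul_def Zg_def hone_def by (auto intro!: continuous_intros)

lemma growth: "\<exists>K\<ge>0. \<forall>x y z. norm (\<alpha> (x, y, z) \<xi>) \<le> norm \<xi> + K * (3 + \<bar>x\<bar> + \<bar>y\<bar> + \<bar>z\<bar>)"
proof -
  define mX where "mX = (SUP r\<in>{-1..1}. norm (\<alpha> (Xg r) \<xi> - \<xi>))"
  define mY where "mY = (SUP r\<in>{-1..1}. norm (\<alpha> (Yg r) \<xi> - \<xi>))"
  define mZ where "mZ = (SUP r\<in>{-1..1}. norm (\<alpha> (Zg r) \<xi> - \<xi>))"
  have gX: "norm (\<alpha> (Xg r) \<xi> - \<xi>) \<le> mX * (1 + \<bar>r\<bar>)" for r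
    using oneparam_growth(2)[OF A hX, of 1 r \<xi>] unfolding mX_def by simp
  have gY: "norm (\<alpha> (Yg r) \<xi> - \<xi>) \<le> mY * (1 + \<bar>r\<bar>)" for r
    using oneparam_growth(2)[OF A hY, of 1 r \<xi>] unfolding mY_def by simp
  have gZ: "norm (\<alpha> (Zg r) \<xi> - \<xi>) \<le> mZ * (1 + \<bar>r\<bar>)" for r
    using oneparam_growth(2)[OF A hZ, of 1 r \<xi>] unfolding mZ_def by simp
  have "norm (\<alpha> (Xg 0) \<xi> - \<xi>) \<le> mX" using gX[of 0] by simp
  then have pX: "mX \<ge> 0" by (rule order_trans[OF norm_ge_zero])
  have "norm (\<alpha> (Yg 0) \<xi> - \<xi>) \<le> mY" using gY[of 0] by simp
  then have pY: "mY \<ge> 0" by (rule order_trans[OF norm_ge_zero])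
  have "norm (\<alpha> (Zg 0) \<xi> - \<xi>) \<le> mZ" using gZ[of 0] by simp
  then have pZ: "mZ \<ge> 0" by (rule order_trans[OF norm_ge_zero])
  define K where "K = mX + mY + mZ"
  have "norm (\<alpha> (x, y, z) \<xi>) \<le> norm \<xi> + K * (3 + \<bar>x\<bar> + \<bar>y\<bar> + \<bar>z\<bar>)" for x y z
  proof -
    have e: "(x, y, z) = hmul (hmul (Yg y) (Zg z)) (Xg x)" unfolding hmul_def Xg_def Yg_def Zg_def by simp
    have eqa: "\<alpha> (x, y, z) \<xi> = \<alpha> (Yg y) (\<alpha> (Zg z) (\<alpha> (Xg x) \<xi>))" unfolding e act_mul[OF A] ..
    have "norm (\<alpha> (x, y, z) \<xi> - \<xi>) \<le> norm (\<alpha> (Yg y) (\<alpha> (Zg z) (\<alpha> (Xg x) \<xi>)) - \<alpha> (Yg y) (\<alpha> (Zg z) \<xi>))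
         + norm (\<alpha> (Yg y) (\<alpha> (Zg z) \<xi>) - \<alpha> (Yg y) \<xi>) + norm (\<alpha> (Yg y) \<xi> - \<xi>)"
    proof -
      define a1 where "a1 = \<alpha> (Yg y) (\<alpha> (Zg z) (\<alpha> (Xg x) \<xi>))"
      define b1 where "b1 = \<alpha> (Yg y) (\<alpha> (Zg z) \<xi>)"
      define c1 where "c1 = \<alpha> (Yg y) \<xi>"
      have t1: "norm (a1 - \<xi>) \<le> norm (a1 - c1) + norm (c1 - \<xi>)" using norm_triangle_ineq[of "a1 - c1" "c1 - \<xi>"] by simp
      have t2: "norm (a1 - c1) \<le> norm (a1 - b1) + norm (b1 - c1)" using norm_triangle_ineq[of "a1 - b1" "b1 - c1"] by simp
      show ?thesis unfolding eqa using t1 t2 unfolding a1_def b1_def c1_def by linarith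
    qed
    also have "\<dots> = norm (\<alpha> (Xg x) \<xi> - \<xi>) + norm (\<alpha> (Zg z) \<xi> - \<xi>) + norm (\<alpha> (Yg y) \<xi> - \<xi>)"
      by (simp add: act_iso[OF A])
    also have "\<dots> \<le> mX * (1 + \<bar>x\<bar>) + mZ * (1 + \<bar>z\<bar>) + mY * (1 + \<bar>y\<bar>)"
      using gX gY gZ by (intro add_mono) auto
    also have "\<dots> \<le> K * (3 + \<bar>x\<bar> + \<bar>y\<bar> + \<bar>z\<bar>)"
      unfolding K_def using pX pY pZ by (simp add: algebra_simps mult_left_mono add_mono)
    finally have "norm (\<alpha> (x, y, z) \<xi> - \<xi>) \<le> K * (3 + \<bar>x\<bar> + \<bar>y\<bar> + \<bar>z\<bar>)" .
    then show ?thesis using norm_triangle_ineq[of "\<alpha> (x, y, z) \<xi> - \<xi>" \<xi>] by simp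
  qed
  moreover have "K \<ge> 0" unfolding K_def using pX pY pZ by simp
  ultimately show ?thesis by blast
qed

end

lemma gd_abs_nn: "(\<integral>\<^sup>+x. ennreal (gdens a x * \<bar>x\<bar>) \<partial>lborel) = ennreal (exp a * sqrt (2 / pi))"
proof -
  have hb: "has_bochner_integral lborel (\<lambda>x. gdens a x * \<bar>x\<bar>) (exp a * sqrt (2 / pi))"
    unfolding gdens_def by (rule B1) simp
  then show ?thesis by (subst nn_integral_eq_integral) (auto simp: has_bochner_integral_iff)
qed

lemma Q_bound:
  "(\<integral>\<^sup>+x. ennreal (gdens a (fst x) * gdens c (snd (snd x)) * (\<bar>gdens b (fst (snd x) - fst x * snd (snd x)) - gdens b (fst (snd x))\<bar>
      * (1 + \<bar>fst (snd x)\<bar> / exp b))) \<partial>lborel) \<le> ennreal (2 * exp (a + c) / exp b)"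
proof -
  define \<sigma> where "\<sigma> = exp b"
  have sp: "\<sigma> > 0" unfolding \<sigma>_def by simp
  have m: "(\<lambda>x::real\<times>real\<times>real. ennreal (gdens a (fst x) * gdens c (snd (snd x)) * (\<bar>gdens b (fst (snd x) - fst x * snd (snd x)) - gdens b (fst (snd x))\<bar>
      * (1 + \<bar>fst (snd x)\<bar> / exp b)))) \<in> borel_measurable borel" by measurable
  have inner: "(\<integral>\<^sup>+u. ennreal (gdens a s * gdens c t * (\<bar>gdens b (u - s * t) - gdens b u\<bar> * (1 + \<bar>u\<bar> / exp b))) \<partial>lborel)
     \<le> ennreal ((pi / \<sigma>) * (gdens a s * \<bar>s\<bar>)) * ennreal (gdens c t * \<bar>t\<bar>)" for s t
  proof -
    have "(\<integral>\<^sup>+u. ennreal (gdens a s * gdens c t * (\<bar>gdens b (u - s * t) - gdens b u\<bar> * (1 + \<bar>u\<bar> / exp b))) \<partial>lborel)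
       = (\<integral>\<^sup>+u. ennreal (gdens a s * gdens c t) * ennreal (\<bar>gdens b (u - s * t) - gdens b u\<bar> * (1 + \<bar>u\<bar> / exp b)) \<partial>lborel)"
      by (intro nn_integral_cong ennreal_mult) (auto intro!: mult_nonneg_nonneg add_nonneg_nonneg)
    also have "\<dots> = ennreal (gdens a s * gdens c t) * (\<integral>\<^sup>+u. ennreal (\<bar>gdens b (u - s * t) - gdens b u\<bar> * (1 + \<bar>u\<bar> / exp b)) \<partial>lborel)"
      by (rule nn_integral_cmult) measurable
    also have "\<dots> \<le> ennreal (gdens a s * gdens c t) * ennreal (pi * \<bar>s * t\<bar> / \<sigma>)"
      using K_bound[OF sp, of "s * t"] unfolding gdens_def \<sigma>_def by (intro mult_left_mono) auto
    also have "\<dots> = ennreal ((pi / \<sigma>) * (gdens a s * \<bar>s\<bar>)) * ennreal (gdens c t * \<bar>t\<bar>)"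
      using sp pi_gt_zero by (simp add: ennreal_mult[symmetric] abs_mult mult_ac)
    finally show ?thesis .
  qed
  have "(\<integral>\<^sup>+x. ennreal (gdens a (fst x) * gdens c (snd (snd x)) * (\<bar>gdens b (fst (snd x) - fst x * snd (snd x)) - gdens b (fst (snd x))\<bar>
      * (1 + \<bar>fst (snd x)\<bar> / exp b))) \<partial>lborel)
     = (\<integral>\<^sup>+s. \<integral>\<^sup>+t. \<integral>\<^sup>+u. ennreal (gdens a s * gdens c t * (\<bar>gdens b (u - s * t) - gdens b u\<bar> * (1 + \<bar>u\<bar> / exp b))) \<partial>lborel \<partial>lborel \<partial>lborel)"
    by (subst iter3[OF m]) simp
  also have "\<dots> \<le> (\<integral>\<^sup>+s. \<integral>\<^sup>+t. ennreal ((pi / \<sigma>) * (gdens a s * \<bar>s\<bar>)) * ennreal (gdens c t * \<bar>t\<bar>) \<partial>lborel \<partial>lborel)"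
    by (intro nn_integral_mono inner)
  also have "\<dots> = (\<integral>\<^sup>+s. ennreal ((pi / \<sigma>) * (gdens a s * \<bar>s\<bar>)) * ennreal (exp c * sqrt (2 / pi)) \<partial>lborel)"
    by (simp add: nn_integral_cmult gd_abs_nn)
  also have "\<dots> = ennreal ((pi / \<sigma>) * (exp a * sqrt (2 / pi))) * ennreal (exp c * sqrt (2 / pi))"
  proof -
    have "(\<integral>\<^sup>+s. ennreal ((pi / \<sigma>) * (gdens a s * \<bar>s\<bar>)) \<partial>lborel) = ennreal (pi / \<sigma>) * (\<integral>\<^sup>+s. ennreal (gdens a s * \<bar>s\<bar>) \<partial>lborel)"
    proof -
      have "(\<integral>\<^sup>+s. ennreal ((pi / \<sigma>) * (gdens a s * \<bar>s\<bar>)) \<partial>lborel) = (\<integral>\<^sup>+s. ennreal (pi / \<sigma>) * ennreal (gdens a s * \<bar>s\<bar>) \<partial>lborel)"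
        using sp pi_gt_zero by (intro nn_integral_cong ennreal_mult) auto
      also have "\<dots> = ennreal (pi / \<sigma>) * (\<integral>\<^sup>+s. ennreal (gdens a s * \<bar>s\<bar>) \<partial>lborel)"
        by (rule nn_integral_cmult) measurable
      finally show ?thesis .
    qed
    then have eqA: "(\<integral>\<^sup>+s. ennreal ((pi / \<sigma>) * (gdens a s * \<bar>s\<bar>)) \<partial>lborel) = ennreal ((pi / \<sigma>) * (exp a * sqrt (2 / pi)))"
      unfolding gd_abs_nn using sp pi_gt_zero by (simp only: ennreal_mult[symmetric] less_imp_le divide_nonneg_pos mult_nonneg_nonneg exp_ge_zero real_sqrt_ge_zero)
    have "(\<integral>\<^sup>+s. ennreal ((pi / \<sigma>) * (gdens a s * \<bar>s\<bar>)) * ennreal (exp c * sqrt (2 / pi)) \<partial>lborel)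
       = (\<integral>\<^sup>+s. ennreal ((pi / \<sigma>) * (gdens a s * \<bar>s\<bar>)) \<partial>lborel) * ennreal (exp c * sqrt (2 / pi))"
      by (rule nn_integral_multc) measurable
    then show ?thesis unfolding eqA .
  qed
  also have "\<dots> = ennreal (2 * exp (a + c) / exp b)"
  proof -
    have "sqrt (2 / pi) * sqrt (2 / pi) = 2 / pi" by (simp add: real_sqrt_mult_self)
    then have "(pi / \<sigma>) * (exp a * sqrt (2 / pi)) * (exp c * sqrt (2 / pi)) = 2 * exp (a + c) / exp b"
      unfolding \<sigma>_def using pi_gt_zero by (simp add: field_simps exp_add)
    moreover have "0 \<le> (pi / \<sigma>) * (exp a * sqrt (2 / pi))" using sp pi_gt_zero by simp
    ultimately show ?thesis by (simp add: ennreal_mult[symmetric])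
  qed
  finally show ?thesis .
qed

lemma shr_apply: "shr x = (fst x, fst (snd x) + fst x * snd (snd x), snd (snd x))"
  by (simp add: shr_def split: prod.split)
lemma prm_apply: "prm x = (snd (snd x), fst (snd x), fst x)"
  by (simp add: prm_def split: prod.split)

lemma cont_meas_lborel: "continuous_on UNIV f \<Longrightarrow> f \<in> borel_measurable lborel"
  using borel_measurable_continuous_onI by simp

lemma hk_integrable_dom:
  fixes f :: "real \<times> real \<times> real \<Rightarrow> 'e::banach"
  assumes "continuous_on UNIV f" "integrable lborel W" "\<And>x. norm (f x) \<le> W x"
  shows "f integrable_on UNIV"
proof (rule integrable_on_all_intervals_UNIV[where g=W])
  show "f integrable_on cbox a b" for a b
    by (rule integrable_continuous) (rule continuous_on_subset[OF assms(1)], simp)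
  show "norm (f x) \<le> W x" for x by (rule assms(3))
  show "W integrable_on UNIV" using has_integral_integral_lborel[OF assms(2)] by blast
qed

lemma real_integrable_dom:
  fixes f :: "real \<times> real \<times> real \<Rightarrow> real"
  assumes "continuous_on UNIV f" "integrable lborel W" "\<And>x. \<bar>f x\<bar> \<le> W x"
  shows "integrable lborel f"
proof (rule Bochner_Integration.integrable_bound[OF assms(2)])
  show "f \<in> borel_measurable lborel" by (rule cont_meas_lborel[OF assms(1)])
  show "AE x in lborel. norm (f x) \<le> norm (W x)"
    using assms(3) by (auto intro!: AE_I2 order_trans[OF _ abs_ge_self])
qed

theorem lemma4p5:
  fixes \<alpha> :: "heis \<Rightarrow> 'e::banach \<Rightarrow> 'e"
    and a b c :: real and \<xi> :: 'e
  assumes "uniformly_convex TYPE('e)"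
    and "cont_affine_isometric_action \<alpha>"
  shows "norm (nu_act \<alpha> a b c \<xi> - nut_act \<alpha> c b a \<xi>)
           \<le> 2 * exp (a + c - b) * (SUP r\<in>{- exp b .. exp b}. norm (\<alpha> (Zg r) \<xi> - \<xi>))"
proof -
  note A = assms(2)
  define \<sigma> where "\<sigma> = exp b"
  have sp: "\<sigma> > 0" unfolding \<sigma>_def by simp
  define Mz where "Mz = (SUP r\<in>{-\<sigma>..\<sigma>}. norm (\<alpha> (Zg r) \<xi> - \<xi>))"
  have dZ: "norm (\<alpha> (Zg r) \<xi> - \<xi>) \<le> Mz * (1 + \<bar>r\<bar> / \<sigma>)" for r
    unfolding Mz_def by (rule oneparam_growth(2)[OF A hZ[OF A] sp])
  have "norm (\<alpha> (Zg 0) \<xi> - \<xi>) \<le> Mz" using dZ[of 0] by simp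
  then have Mz0: "Mz \<ge> 0" by (rule order_trans[OF norm_ge_zero])
  obtain K where K0: "K \<ge> 0" and gr: "\<And>x y z. norm (\<alpha> (x, y, z) \<xi>) \<le> norm \<xi> + K * (3 + \<bar>x\<bar> + \<bar>y\<bar> + \<bar>z\<bar>)"
    using growth[OF A, of \<xi>] by blast
  define C where "C = norm \<xi> + 3 * K"
  have gr2: "norm (\<alpha> (x, y, w) \<xi>) \<le> C * ((1 + \<bar>x\<bar>) * (1 + \<bar>y\<bar>) * (1 + \<bar>z\<bar>))" if "\<bar>w\<bar> \<le> \<bar>z\<bar> + \<bar>x\<bar> * \<bar>y\<bar>" for x y z w
    unfolding C_def using order_trans[OF gr poly_bound[OF K0 norm_ge_zero that]] .
  define D where "D = nu_act \<alpha> a b c \<xi> - nut_act \<alpha> c b a \<xi>"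
  obtain l where bl: "bounded_linear l" and lb: "\<And>x. \<bar>l x\<bar> \<le> norm x" and lD: "l D = norm D"
    using hahn_banach_norm[of D] by blast
  define \<Phi> where "\<Phi> g = l (\<alpha> g \<xi>)" for g
  have \<Phi>c: "continuous_on UNIV \<Phi>"
    unfolding \<Phi>_def[abs_def]
    by (rule continuous_on_compose2[OF linear_continuous_on[OF bl] act_cont_comp[OF A]]) (auto intro: continuous_intros)
  have \<Phi>cc[continuous_intros]: "continuous_on S f \<Longrightarrow> continuous_on S (\<lambda>x. \<Phi> (f x))" for S and f :: "real \<times> real \<times> real \<Rightarrow> heis"
    using continuous_on_compose2[OF \<Phi>c] by blast
  have lscale: "l (r *\<^sub>R v) = r * l v" for r v using linear_cmul[OF bounded_linear.linear[OF bl]] by simp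

  define w1 where "w1 x = gdens a (fst x) * gdens b (fst (snd x)) * gdens c (snd (snd x))" for x :: "real \<times> real \<times> real"
  define f1 where "f1 x = w1 x *\<^sub>R \<alpha> (fst x, snd (snd x), fst (snd x) + fst x * snd (snd x)) \<xi>" for x
  have nu_eq: "nu_act \<alpha> a b c \<xi> = integral UNIV f1"
    unfolding nu_act_def f1_def w1_def
    by (intro arg_cong[where f="integral UNIV"] ext) (auto simp: hmul_def Xg_def Yg_def Zg_def split: prod.split)
  define w2 where "w2 x = gdens c (fst x) * gdens b (fst (snd x)) * gdens a (snd (snd x))" for x :: "real \<times> real \<times> real"
  define f2 where "f2 x = w2 x *\<^sub>R \<alpha> (snd (snd x), fst x, fst (snd x)) \<xi>" for x
  have nut_eq: "nut_act \<alpha> c b a \<xi> = integral UNIV f2"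
    unfolding nut_act_def f2_def w2_def
    by (intro arg_cong[where f="integral UNIV"] ext) (auto simp: hmul_def Xg_def Yg_def Zg_def split: prod.split)

  define W1 where "W1 x = C * (gdens a (fst x) * (1 + \<bar>fst x\<bar>) * (gdens b (fst (snd x)) * (1 + \<bar>fst (snd x)\<bar>))
      * (gdens c (snd (snd x)) * (1 + \<bar>snd (snd x)\<bar>)))" for x :: "real \<times> real \<times> real"
  define W2 where "W2 x = C * (gdens c (fst x) * (1 + \<bar>fst x\<bar>) * (gdens b (fst (snd x)) * (1 + \<bar>fst (snd x)\<bar>))
      * (gdens a (snd (snd x)) * (1 + \<bar>snd (snd x)\<bar>)))" for x :: "real \<times> real \<times> real"
  have W1i: "integrable lborel W1" unfolding W1_def by (intro integrable_mult_right dom_integrable)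
  have W2i: "integrable lborel W2" unfolding W2_def by (intro integrable_mult_right dom_integrable)
  have w1_0: "w1 x \<ge> 0" for x unfolding w1_def by simp
  have w2_0: "w2 x \<ge> 0" for x unfolding w2_def by simp
  have W1_eq: "W1 x = w1 x * (C * ((1 + \<bar>fst x\<bar>) * (1 + \<bar>snd (snd x)\<bar>) * (1 + \<bar>fst (snd x)\<bar>)))" for x
    unfolding W1_def w1_def by (simp add: mult_ac)
  have W2_eq: "W2 x = w2 x * (C * ((1 + \<bar>snd (snd x)\<bar>) * (1 + \<bar>fst x\<bar>) * (1 + \<bar>fst (snd x)\<bar>)))" for x
    unfolding W2_def w2_def by (simp add: mult_ac)
  have nf1: "norm (f1 x) \<le> W1 x" for x
  proof -
    have "\<bar>fst (snd x) + fst x * snd (snd x)\<bar> \<le> \<bar>fst (snd x)\<bar> + \<bar>fst x\<bar> * \<bar>snd (snd x)\<bar>"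
      by (metis abs_mult abs_triangle_ineq)
    from gr2[OF this] show ?thesis unfolding f1_def W1_eq using w1_0 by (simp add: mult_left_mono)
  qed
  have nf2: "norm (f2 x) \<le> W2 x" for x
  proof -
    have "\<bar>fst (snd x)\<bar> \<le> \<bar>fst (snd x)\<bar> + \<bar>snd (snd x)\<bar> * \<bar>fst x\<bar>" by simp
    from gr2[OF this] show ?thesis unfolding f2_def W2_eq using w2_0 by (simp add: mult_left_mono)
  qed
  have w1c: "continuous_on UNIV w1" unfolding w1_def[abs_def] by (intro continuous_intros)
  have w2c: "continuous_on UNIV w2" unfolding w2_def[abs_def] by (intro continuous_intros)
  have f1c: "continuous_on UNIV f1" unfolding f1_def[abs_def]
    by (intro continuous_on_scaleR w1c act_cont_comp[OF A] continuous_intros)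
  have f2c: "continuous_on UNIV f2" unfolding f2_def[abs_def]
    by (intro continuous_on_scaleR w2c act_cont_comp[OF A] continuous_intros)
  have f1i: "f1 integrable_on UNIV" by (rule hk_integrable_dom[OF f1c W1i nf1])
  have f2i: "f2 integrable_on UNIV" by (rule hk_integrable_dom[OF f2c W2i nf2])

  define F1 where "F1 x = w1 x * \<Phi> (fst x, snd (snd x), fst (snd x) + fst x * snd (snd x))" for x
  define F2 where "F2 x = w2 x * \<Phi> (snd (snd x), fst x, fst (snd x))" for x
  define G1 where "G1 x = gdens a (fst x) * gdens b (fst (snd x) - fst x * snd (snd x)) * gdens c (snd (snd x)) * \<Phi> (fst x, snd (snd x), fst (snd x))" for x :: "real \<times> real \<times> real"
  define G2 where "G2 x = gdens a (fst x) * gdens b (fst (snd x)) * gdens c (snd (snd x)) * \<Phi> (fst x, snd (snd x), fst (snd x))" for x :: "real \<times> real \<times> real"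
  define K1 where "K1 x = gdens a (fst x) * gdens b (fst (snd x) - fst x * snd (snd x)) * gdens c (snd (snd x)) * \<Phi> (fst x, snd (snd x), 0)" for x :: "real \<times> real \<times> real"
  define K0 where "K0 x = gdens a (fst x) * gdens b (fst (snd x)) * gdens c (snd (snd x)) * \<Phi> (fst x, snd (snd x), 0)" for x :: "real \<times> real \<times> real"
  have F1f: "F1 x = l (f1 x)" for x unfolding F1_def f1_def \<Phi>_def lscale ..
  have F2f: "F2 x = l (f2 x)" for x unfolding F2_def f2_def \<Phi>_def lscale ..
  have F1G1: "F1 x = G1 (shr x)" for x unfolding F1_def G1_def w1_def shr_apply by (simp add: mult_ac)
  have F2G2: "F2 x = G2 (prm x)" for x unfolding F2_def G2_def w2_def prm_apply by (simp add: mult_ac)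
  have K0K1: "K0 x = K1 (shr x)" for x unfolding K0_def K1_def shr_apply by (simp add: mult_ac)
  have F1c: "continuous_on UNIV F1" unfolding F1_def[abs_def] by (intro continuous_intros w1c)
  have F2c: "continuous_on UNIV F2" unfolding F2_def[abs_def] by (intro continuous_intros w2c)
  have G1c: "continuous_on UNIV G1" unfolding G1_def[abs_def] by (intro continuous_intros)
  have G2c: "continuous_on UNIV G2" unfolding G2_def[abs_def] by (intro continuous_intros)
  have K1c: "continuous_on UNIV K1" unfolding K1_def[abs_def] by (intro continuous_intros)
  have K0c: "continuous_on UNIV K0" unfolding K0_def[abs_def] by (intro continuous_intros)
  have G1m[measurable]: "G1 \<in> borel_measurable borel" by (rule borel_measurable_continuous_onI[OF G1c])
  have G2m[measurable]: "G2 \<in> borel_measurable borel" by (rule borel_measurable_continuous_onI[OF G2c])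
  have K1m[measurable]: "K1 \<in> borel_measurable borel" by (rule borel_measurable_continuous_onI[OF K1c])
  have F1i: "integrable lborel F1"
  proof (rule real_integrable_dom[OF F1c W1i])
    fix x show "\<bar>F1 x\<bar> \<le> W1 x" unfolding F1f using order_trans[OF lb nf1] .
  qed
  have F2i: "integrable lborel F2"
  proof (rule real_integrable_dom[OF F2c W2i])
    fix x show "\<bar>F2 x\<bar> \<le> W2 x" unfolding F2f using order_trans[OF lb nf2] .
  qed
  have K0i: "integrable lborel K0"
  proof (rule real_integrable_dom[OF K0c W1i])
    fix x :: "real \<times> real \<times> real"
    have "\<bar>0::real\<bar> \<le> \<bar>fst (snd x)\<bar> + \<bar>fst x\<bar> * \<bar>snd (snd x)\<bar>" by simp
    from gr2[OF this] have "\<bar>\<Phi> (fst x, snd (snd x), 0)\<bar> \<le> C * ((1 + \<bar>fst x\<bar>) * (1 + \<bar>snd (snd x)\<bar>) * (1 + \<bar>fst (snd x)\<bar>))"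
      unfolding \<Phi>_def using lb order_trans by blast
    then have "w1 x * \<bar>\<Phi> (fst x, snd (snd x), 0)\<bar> \<le> W1 x" unfolding W1_eq using w1_0 by (rule mult_left_mono)
    moreover have "K0 x = w1 x * \<Phi> (fst x, snd (snd x), 0)" unfolding K0_def w1_def ..
    ultimately show "\<bar>K0 x\<bar> \<le> W1 x" using w1_0 by (simp add: abs_mult)
  qed
  have G1i: "integrable lborel G1" using F1i unfolding F1G1 shr_integrable[OF G1m] .
  have G2i: "integrable lborel G2" using F2i unfolding F2G2 prm_integrable[OF G2m] .
  have K1i: "integrable lborel K1" using K0i unfolding K0K1 shr_integrable[OF K1m] .
  have lnu: "l (nu_act \<alpha> a b c \<xi>) = integral\<^sup>L lborel G1"
  proof -
    have "l (nu_act \<alpha> a b c \<xi>) = integral UNIV (l \<circ> f1)" unfolding nu_eq by (rule integral_linear[OF f1i bl, symmetric])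
    also have "l \<circ> f1 = F1" using F1f by auto
    also have "integral UNIV F1 = integral\<^sup>L lborel F1" by (rule integral_lborel[OF F1i])
    also have "\<dots> = integral\<^sup>L lborel G1" unfolding F1G1 by (rule shr_integral[OF G1m])
    finally show ?thesis .
  qed
  have lnut: "l (nut_act \<alpha> c b a \<xi>) = integral\<^sup>L lborel G2"
  proof -
    have "l (nut_act \<alpha> c b a \<xi>) = integral UNIV (l \<circ> f2)" unfolding nut_eq by (rule integral_linear[OF f2i bl, symmetric])
    also have "l \<circ> f2 = F2" using F2f by auto
    also have "integral UNIV F2 = integral\<^sup>L lborel F2" by (rule integral_lborel[OF F2i])
    also have "\<dots> = integral\<^sup>L lborel G2" unfolding F2G2 by (rule prm_integral[OF G2m])
    finally show ?thesis .
  qed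
  have Keq: "integral\<^sup>L lborel K1 = integral\<^sup>L lborel K0" unfolding K0K1 by (rule shr_integral[OF K1m, symmetric])
  define R where "R x = G1 x - G2 x - K1 x + K0 x" for x
  have Ri: "integrable lborel R" unfolding R_def[abs_def] using G1i G2i K1i K0i by auto
  have nD: "norm D = integral\<^sup>L lborel R"
  proof -
    have "norm D = l D" using lD by simp
    also have "l D = l (nu_act \<alpha> a b c \<xi>) - l (nut_act \<alpha> c b a \<xi>)"
      unfolding D_def by (rule linear_diff[OF bounded_linear.linear[OF bl]])
    also have "\<dots> = integral\<^sup>L lborel G1 - integral\<^sup>L lborel G2 - integral\<^sup>L lborel K1 + integral\<^sup>L lborel K0"
      unfolding lnu lnut Keq by simp
    also have "\<dots> = integral\<^sup>L lborel R" unfolding R_def[abs_def] using G1i G2i K1i K0i by simp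
    finally show ?thesis .
  qed
  have \<Phi>diff: "\<bar>\<Phi> (s, t, u) - \<Phi> (s, t, 0)\<bar> \<le> Mz * (1 + \<bar>u\<bar> / \<sigma>)" for s t u
  proof -
    have e: "(s, t, u) = hmul (s, t, 0) (Zg u)" unfolding hmul_def Zg_def by simp
    have "\<Phi> (s, t, u) - \<Phi> (s, t, 0) = l (\<alpha> (s, t, u) \<xi> - \<alpha> (s, t, 0) \<xi>)"
      unfolding \<Phi>_def by (rule linear_diff[OF bounded_linear.linear[OF bl], symmetric])
    then have "\<bar>\<Phi> (s, t, u) - \<Phi> (s, t, 0)\<bar> \<le> norm (\<alpha> (s, t, u) \<xi> - \<alpha> (s, t, 0) \<xi>)" using lb by simp
    also have "norm (\<alpha> (s, t, u) \<xi> - \<alpha> (s, t, 0) \<xi>) = norm (\<alpha> (Zg u) \<xi> - \<xi>)"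
      by (subst e) (simp add: act_mul[OF A] act_iso[OF A])
    finally show ?thesis using dZ[of u] by linarith
  qed
  define Qf where "Qf x = gdens a (fst x) * gdens c (snd (snd x)) * (\<bar>gdens b (fst (snd x) - fst x * snd (snd x)) - gdens b (fst (snd x))\<bar>
      * (1 + \<bar>fst (snd x)\<bar> / exp b))" for x :: "real \<times> real \<times> real"
  have Rle: "norm (R x) \<le> Mz * Qf x" for x
  proof -
    define s where "s = fst x"
    define u where "u = fst (snd x)"
    define t where "t = snd (snd x)"
    have Rf: "R x = gdens a s * gdens c t * (gdens b (u - s * t) - gdens b u) * (\<Phi> (s, t, u) - \<Phi> (s, t, 0))"
      unfolding R_def G1_def G2_def K1_def K0_def s_def u_def t_def by (simp add: algebra_simps)
    have "norm (R x) = gdens a s * gdens c t * \<bar>gdens b (u - s * t) - gdens b u\<bar> * \<bar>\<Phi> (s, t, u) - \<Phi> (s, t, 0)\<bar>"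
      unfolding Rf by (simp add: abs_mult)
    also have "\<dots> \<le> gdens a s * gdens c t * \<bar>gdens b (u - s * t) - gdens b u\<bar> * (Mz * (1 + \<bar>u\<bar> / \<sigma>))"
      by (intro mult_left_mono \<Phi>diff) auto
    also have "\<dots> = Mz * Qf x" unfolding Qf_def s_def u_def t_def \<sigma>_def by (simp add: mult_ac)
    finally show ?thesis .
  qed
  have "ennreal (norm (integral\<^sup>L lborel R)) \<le> (\<integral>\<^sup>+x. norm (R x) \<partial>lborel)"
    by (rule integral_norm_bound_ennreal[OF Ri])
  also have "\<dots> \<le> (\<integral>\<^sup>+x. ennreal Mz * ennreal (Qf x) \<partial>lborel)"
  proof (rule nn_integral_mono)
    fix x
    have "Qf x \<ge> 0" unfolding Qf_def by (auto intro!: mult_nonneg_nonneg add_nonneg_nonneg)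
    then show "ennreal (norm (R x)) \<le> ennreal Mz * ennreal (Qf x)"
      using Rle[of x] Mz0 by (simp add: ennreal_mult[symmetric])
  qed
  also have "\<dots> = ennreal Mz * (\<integral>\<^sup>+x. ennreal (Qf x) \<partial>lborel)"
    by (rule nn_integral_cmult) (unfold Qf_def, measurable)
  also have "\<dots> \<le> ennreal Mz * ennreal (2 * exp (a + c) / exp b)"
    by (rule mult_left_mono) (unfold Qf_def, rule Q_bound, simp)
  also have "\<dots> = ennreal (Mz * (2 * exp (a + c) / exp b))"
    using Mz0 by (simp add: ennreal_mult[symmetric])
  finally have "norm (integral\<^sup>L lborel R) \<le> Mz * (2 * exp (a + c) / exp b)"
    using Mz0 by (subst (asm) ennreal_le_iff) auto
  then have "norm D \<le> Mz * (2 * exp (a + c) / exp b)" unfolding nD by simp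
  also have "Mz * (2 * exp (a + c) / exp b) = 2 * exp (a + c - b) * (SUP r\<in>{- exp b .. exp b}. norm (\<alpha> (Zg r) \<xi> - \<xi>))"
    unfolding Mz_def \<sigma>_def by (simp add: exp_diff)
  finally show ?thesis unfolding D_def .
qed

end
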